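(* Let $V\in BC^\infty(\mathbb{R}^2;\mathbb{R})$, $\mathcal{A}\in BC^\infty(\mathbb{R}^2;\mathbb{R}^2)$, $b\in\mathbb{R}$, $A(\mathbf{x})=(-x_2,0)$, $E=\{x_2>0\}$, and let $h_b^E$ be the closure in $L^2(E)$ of $(-\mathrm{i}\nabla-bA)^2$ defined on $C_c^\infty(\bar E)$. Let $Y\in\{\overline{P_1},\overline{P_2},\overline{W}\}$. Then $D(h_b^E)\subset D(Y)$ and there exists a constant $C$ such that $$\|Y(h_b^E+\lambda)^{-1}\|\le C\frac{\sqrt{1+\lambda}}{\lambda}$$ for all $\lambda>0$. In particular, $\overline{P_1}$, $\overline{P_2}$ and $\overline{W}$ are infinitesimally $h_b^E$-bounded.
   Context: $BC^\infty$ denotes smooth functions with all derivatives bounded. $C_c^\infty(\bar E)$ is the set of smooth functions on $E$ whose partial derivatives all extend continuously to $\bar E$ and which vanish outside $(-a,a)\times(0,a)$ for some $a>0$. For $j\in\{1,2\}$, $P_j=-\mathrm{i}\partial_j-bA_j-\mathcal{A}_j$ with domain $C_c^\infty(\bar E)$, $P=(P_1,P_2)$, and $W=-2\mathcal{A}\cdot P-\mathrm{i}(\nabla\cdot\mathcal{A})+\mathcal{A}^2+V$ with domain $C_c^\infty(\bar E)$; bars denote closures in $L^2(E)$. $h_b^E$ is self-adjoint and nonnegative. *)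

theory Defs
  imports "HOL-Analysis.Analysis"
begin

type_synonym R2 = "real^2"
type_synonym cfun = "R2 \<Rightarrow> complex"

definition pdiff :: "2 \<Rightarrow> (R2 \<Rightarrow> 'b::real_normed_vector) \<Rightarrow> R2 \<Rightarrow> 'b" where
  "pdiff i f x = vector_derivative (\<lambda>t. f (x + t *\<^sub>R axis i 1)) (at 0)"

fun iter_pd :: "2 list \<Rightarrow> (R2 \<Rightarrow> 'b::real_normed_vector) \<Rightarrow> R2 \<Rightarrow> 'b" where
  "iter_pd [] f = f"
| "iter_pd (i # ks) f = pdiff i (iter_pd ks f)"

definition smooth_on :: "R2 set \<Rightarrow> (R2 \<Rightarrow> 'b::real_normed_vector) \<Rightarrow> bool" where
  "smooth_on S f \<longleftrightarrow>
     (\<forall>ks. continuous_on S (iter_pd ks f) \<and>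
        (\<forall>i. \<forall>x\<in>S. (\<lambda>t. iter_pd ks f (x + t *\<^sub>R axis i 1)) differentiable (at 0)))"

definition BC_inf :: "(R2 \<Rightarrow> 'b::real_normed_vector) \<Rightarrow> bool" where
  "BC_inf f \<longleftrightarrow> smooth_on UNIV f \<and> (\<forall>ks. bounded (range (iter_pd ks f)))"

definition E :: "R2 set" where
  "E = {x. x $ 2 > 0}"

text \<open>C_c^infinity of the closure of E: smooth on E, all partial derivatives extend
  continuously to the closure of E, and vanishing outside (-a,a) x (0,a).\<close>
definition Cc :: "cfun set" where
  "Cc = {u. smooth_on E u \<and>
        (\<forall>ks. \<exists>g. continuous_on (closure E) g \<and> (\<forall>x\<in>E. g x = iter_pd ks u x)) \<and>
        (\<exists>a>0. \<forall>x\<in>E. \<not> (- a < x $ 1 \<and> x $ 1 < a \<and> x $ 2 < a) \<longrightarrow> u x = 0)}"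

definition L2 :: "cfun \<Rightarrow> bool" where
  "L2 f \<longleftrightarrow> f \<in> borel_measurable (lebesgue_on E) \<and>
            integrable (lebesgue_on E) (\<lambda>x. (cmod (f x))\<^sup>2)"

definition nrm :: "cfun \<Rightarrow> real" where
  "nrm f = sqrt (\<integral>x. (cmod (f x))\<^sup>2 \<partial>(lebesgue_on E))"

definition ip :: "cfun \<Rightarrow> cfun \<Rightarrow> complex" where
  "ip f g = (\<integral>x. f x * cnj (g x) \<partial>(lebesgue_on E))"

definition L2_conv :: "(nat \<Rightarrow> cfun) \<Rightarrow> cfun \<Rightarrow> bool" where
  "L2_conv \<phi> u \<longleftrightarrow> (\<forall>n. L2 (\<phi> n)) \<and> L2 u \<and> (\<lambda>n. nrm (\<lambda>x. \<phi> n x - u x)) \<longlonglongrightarrow> 0"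

text \<open>Free magnetic momenta P^0_j = -i d_j - b A_j with A(x) = (-x_2, 0).\<close>
definition P01 :: "real \<Rightarrow> cfun \<Rightarrow> cfun" where
  "P01 b u x = - \<i> * pdiff 1 u x + complex_of_real (b * x $ 2) * u x"

definition P02 :: "real \<Rightarrow> cfun \<Rightarrow> cfun" where
  "P02 b u x = - \<i> * pdiff 2 u x"

definition P1 :: "real \<Rightarrow> (R2 \<Rightarrow> real^2) \<Rightarrow> cfun \<Rightarrow> cfun" where
  "P1 b Av u x = P01 b u x - complex_of_real (Av x $ 1) * u x"

definition P2 :: "real \<Rightarrow> (R2 \<Rightarrow> real^2) \<Rightarrow> cfun \<Rightarrow> cfun" where
  "P2 b Av u x = P02 b u x - complex_of_real (Av x $ 2) * u x"

definition W :: "real \<Rightarrow> (R2 \<Rightarrow> real^2) \<Rightarrow> (R2 \<Rightarrow> real) \<Rightarrow> cfun \<Rightarrow> cfun" where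
  "W b Av V u x =
     - 2 * (complex_of_real (Av x $ 1) * P1 b Av u x + complex_of_real (Av x $ 2) * P2 b Av u x)
     - \<i> * complex_of_real (pdiff 1 (\<lambda>y. Av y $ 1) x + pdiff 2 (\<lambda>y. Av y $ 2) x) * u x
     + complex_of_real ((norm (Av x))\<^sup>2) * u x
     + complex_of_real (V x) * u x"

definition clos_graph :: "(cfun \<Rightarrow> cfun) \<Rightarrow> cfun \<Rightarrow> cfun \<Rightarrow> bool" where
  "clos_graph T u v \<longleftrightarrow>
     (\<exists>\<phi>. (\<forall>n. \<phi> n \<in> Cc) \<and> L2_conv \<phi> u \<and> L2_conv (\<lambda>n. T (\<phi> n)) v)"

text \<open>Closure of the quadratic form |(-i grad - bA) u|^2 on Cc:
  u lies in the form domain, with (closed) magnetic gradient (g1, g2).\<close>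
definition form_dom :: "real \<Rightarrow> cfun \<Rightarrow> cfun \<Rightarrow> cfun \<Rightarrow> bool" where
  "form_dom b u g1 g2 \<longleftrightarrow>
     (\<exists>\<phi>. (\<forall>n. \<phi> n \<in> Cc) \<and> L2_conv \<phi> u \<and>
          L2_conv (\<lambda>n. P01 b (\<phi> n)) g1 \<and> L2_conv (\<lambda>n. P02 b (\<phi> n)) g2)"

text \<open>Graph of h_b^E: the nonnegative self-adjoint operator associated with the
  closed form, i.e. (-i grad - bA)^2 on the closure of Cc (Neumann realisation).\<close>
definition h_graph :: "real \<Rightarrow> cfun \<Rightarrow> cfun \<Rightarrow> bool" where
  "h_graph b u f \<longleftrightarrow> L2 f \<and>
     (\<exists>g1 g2. form_dom b u g1 g2 \<and>
        (\<forall>v k1 k2. form_dom b v k1 k2 \<longrightarrow> ip g1 k1 + ip g2 k2 = ip f v))"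

end

theory Submission
  imports Defs "HOL-Analysis.Analysis"
begin


abbreviation "ME \<equiv> lebesgue_on E"

lemma E_open: "open E"
  unfolding E_def by (auto intro!: open_Collect_less continuous_intros)

lemma E_sets: "E \<in> sets lebesgue"
  using E_open by (simp add: borel_open sets_completionI_sets)

lemma space_ME[simp]: "space ME = E"
  by (simp add: space_restrict_space)

lemma L2_meas: "L2 f \<Longrightarrow> f \<in> borel_measurable ME" by (simp add: L2_def)
lemma L2_int: "L2 f \<Longrightarrow> integrable ME (\<lambda>x. (cmod (f x))\<^sup>2)" by (simp add: L2_def)

lemma meas_cnj: "f \<in> borel_measurable M \<Longrightarrow> (\<lambda>x. cnj (f x)) \<in> borel_measurable M"
  by (rule borel_measurable_continuous_on[where f=cnj]) (auto intro: continuous_intros)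

lemma L2I:
  assumes "f \<in> borel_measurable ME" "integrable ME g" "\<And>x. x \<in> E \<Longrightarrow> (cmod (f x))\<^sup>2 \<le> g x"
  shows "L2 f"
  unfolding L2_def
proof
  show "f \<in> borel_measurable ME" by fact
  show "integrable ME (\<lambda>x. (cmod (f x))\<^sup>2)"
  proof (rule Bochner_Integration.integrable_bound[OF assms(2)])
    show "(\<lambda>x. (cmod (f x))\<^sup>2) \<in> borel_measurable ME" using assms(1) by measurable
    show "AE x in ME. norm ((cmod (f x))\<^sup>2) \<le> norm (g x)"
      using assms(3) by (intro AE_I2) (auto, smt (verit) assms(3) zero_le_power2)
  qed
qed

lemma L2_add: assumes "L2 f" "L2 g" shows "L2 (\<lambda>x. f x + g x)"
proof (rule L2I)
  show "(\<lambda>x. f x + g x) \<in> borel_measurable ME" using assms by (auto simp: L2_def)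
  show "integrable ME (\<lambda>x. 2 * (cmod (f x))\<^sup>2 + 2 * (cmod (g x))\<^sup>2)"
    using assms by (auto simp: L2_def)
  fix x
  have "cmod (f x + g x) \<le> cmod (f x) + cmod (g x)" by (rule norm_triangle_ineq)
  then have "(cmod (f x + g x))\<^sup>2 \<le> (cmod (f x) + cmod (g x))\<^sup>2"
    by (simp add: power_mono)
  also have "\<dots> \<le> 2 * (cmod (f x))\<^sup>2 + 2 * (cmod (g x))\<^sup>2"
    using sum_squares_bound[of "cmod (f x)" "cmod (g x)"] by (simp add: power2_sum)
  finally show "(cmod (f x + g x))\<^sup>2 \<le> 2 * (cmod (f x))\<^sup>2 + 2 * (cmod (g x))\<^sup>2" .
qed

lemma L2_mult: assumes "L2 f" "h \<in> borel_measurable ME" "\<And>x. x \<in> E \<Longrightarrow> cmod (h x) \<le> B"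
  shows "L2 (\<lambda>x. h x * f x)"
proof (rule L2I)
  show "(\<lambda>x. h x * f x) \<in> borel_measurable ME" using assms by (auto simp: L2_def)
  show "integrable ME (\<lambda>x. B\<^sup>2 * (cmod (f x))\<^sup>2)"
    using assms by (auto simp: L2_def)
  fix x assume x: "x \<in> E"
  have "cmod (h x * f x) \<le> B * cmod (f x)"
    using assms(3)[OF x] by (simp add: norm_mult mult_right_mono)
  moreover have "0 \<le> cmod (h x * f x)" by simp
  ultimately have "(cmod (h x * f x))\<^sup>2 \<le> (B * cmod (f x))\<^sup>2" by (intro power_mono) auto
  then show "(cmod (h x * f x))\<^sup>2 \<le> B\<^sup>2 * (cmod (f x))\<^sup>2" by (simp add: power_mult_distrib)
qed

lemma L2_cmult: "L2 f \<Longrightarrow> L2 (\<lambda>x. c * f x)"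
  by (rule L2_mult[where B="cmod c"]) auto

lemma L2_uminus: "L2 f \<Longrightarrow> L2 (\<lambda>x. - f x)"
  using L2_cmult[of f "-1"] by simp

lemma L2_diff: "L2 f \<Longrightarrow> L2 g \<Longrightarrow> L2 (\<lambda>x. f x - g x)"
  using L2_add[of f "\<lambda>x. - g x"] L2_uminus[of g] by simp

lemma L2_zero: "L2 (\<lambda>x. 0)"
  by (simp add: L2_def)

lemma L2_cnj: "L2 f \<Longrightarrow> L2 (\<lambda>x. cnj (f x))"
  by (auto simp: L2_def intro: meas_cnj)

lemma ip_integrable: assumes "L2 f" "L2 g"
  shows "integrable ME (\<lambda>x. f x * cnj (g x))"
proof (rule Bochner_Integration.integrable_bound)
  show "integrable ME (\<lambda>x. (cmod (f x))\<^sup>2 + (cmod (g x))\<^sup>2)" using assms by (auto simp: L2_def)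
  show "(\<lambda>x. f x * cnj (g x)) \<in> borel_measurable ME" using assms by (auto simp: L2_def intro!: borel_measurable_times meas_cnj)
  show "AE x in ME. norm (f x * cnj (g x)) \<le> norm ((cmod (f x))\<^sup>2 + (cmod (g x))\<^sup>2)"
  proof (intro AE_I2)
    fix x
    have "norm (f x * cnj (g x)) = cmod (f x) * cmod (g x)" by (simp add: norm_mult)
    also have "\<dots> \<le> (cmod (f x))\<^sup>2 + (cmod (g x))\<^sup>2"
      using sum_squares_bound[of "cmod (f x)" "cmod (g x)"] mult_nonneg_nonneg[OF norm_ge_zero norm_ge_zero, of "f x" "g x"] by linarith
    finally show "norm (f x * cnj (g x)) \<le> norm ((cmod (f x))\<^sup>2 + (cmod (g x))\<^sup>2)" by simp
  qed
qed

lemma absprod_integrable: assumes "L2 f" "L2 g"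
  shows "integrable ME (\<lambda>x. cmod (f x) * cmod (g x))"
  using integrable_norm[OF ip_integrable[OF assms]] by (simp add: norm_mult)

lemma nrm_nonneg: "0 \<le> nrm f" by (simp add: nrm_def)

lemma nrm_sq: "(nrm f)\<^sup>2 = (\<integral>x. (cmod (f x))\<^sup>2 \<partial>ME)"
  unfolding nrm_def by (simp add: integral_nonneg_AE)

lemma ip_self: "ip f f = complex_of_real ((nrm f)\<^sup>2)"
proof -
  have "ip f f = (\<integral>x. complex_of_real ((cmod (f x))\<^sup>2) \<partial>ME)"
    unfolding ip_def by (intro Bochner_Integration.integral_cong) (auto simp: complex_mult_cnj cmod_def power2_eq_square)
  also have "\<dots> = complex_of_real (\<integral>x. (cmod (f x))\<^sup>2 \<partial>ME)" by (rule integral_complex_of_real)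
  finally show ?thesis by (simp add: nrm_sq)
qed


lemma ip_add_left: "L2 f \<Longrightarrow> L2 g \<Longrightarrow> L2 h \<Longrightarrow> ip (\<lambda>x. f x + g x) h = ip f h + ip g h"
  unfolding ip_def by (simp add: distrib_right ip_integrable)

lemma ip_diff_left: "L2 f \<Longrightarrow> L2 g \<Longrightarrow> L2 h \<Longrightarrow> ip (\<lambda>x. f x - g x) h = ip f h - ip g h"
  unfolding ip_def by (simp add: left_diff_distrib ip_integrable)

lemma ip_diff_right: "L2 f \<Longrightarrow> L2 g \<Longrightarrow> L2 h \<Longrightarrow> ip h (\<lambda>x. f x - g x) = ip h f - ip h g"
  unfolding ip_def by (simp add: right_diff_distrib ip_integrable)

lemma ip_add_right: "L2 f \<Longrightarrow> L2 g \<Longrightarrow> L2 h \<Longrightarrow> ip h (\<lambda>x. f x + g x) = ip h f + ip h g"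
  unfolding ip_def by (simp add: distrib_left ip_integrable)

lemma ip_cmult_left: "ip (\<lambda>x. c * f x) g = c * ip f g"
  unfolding ip_def by (simp add: mult.assoc)

lemma ip_cmult_right: "ip f (\<lambda>x. c * g x) = cnj c * ip f g"
  unfolding ip_def by (simp add: mult.left_commute)

lemma ip_sym: "ip g f = cnj (ip f g)"
proof -
  have "cnj (ip f g) = (\<integral>x. cnj (f x * cnj (g x)) \<partial>ME)"
    unfolding ip_def by (rule Bochner_Integration.integral_cnj[symmetric])
  then show ?thesis unfolding ip_def by (simp add: mult.commute)
qed

lemma CS_real:
  assumes "L2 f" "L2 g"
  shows "(\<integral>x. cmod (f x) * cmod (g x) \<partial>ME) \<le> nrm f * nrm g"
proof -
  define A where "A = (\<integral>x. (cmod (f x))\<^sup>2 \<partial>ME)"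
  define B where "B = (\<integral>x. (cmod (g x))\<^sup>2 \<partial>ME)"
  define I where "I = (\<integral>x. cmod (f x) * cmod (g x) \<partial>ME)"
  have A0: "0 \<le> A" unfolding A_def by (simp add: integral_nonneg_AE)
  have B0: "0 \<le> B" unfolding B_def by (simp add: integral_nonneg_AE)
  have key: "I \<le> (t * A + B / t) / 2" if t: "t > 0" for t
  proof -
    have "I \<le> (\<integral>x. (t * (cmod (f x))\<^sup>2 + (cmod (g x))\<^sup>2 / t) / 2 \<partial>ME)"
      unfolding I_def
    proof (rule integral_mono)
      show "integrable ME (\<lambda>x. cmod (f x) * cmod (g x))" by (rule absprod_integrable[OF assms])
      show "integrable ME (\<lambda>x. (t * (cmod (f x))\<^sup>2 + (cmod (g x))\<^sup>2 / t) / 2)"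
        using assms by (auto simp: L2_def)
      fix x
      have "0 \<le> (t * cmod (f x) - cmod (g x))\<^sup>2" by simp
      then have "2 * t * (cmod (f x) * cmod (g x)) \<le> t * t * (cmod (f x))\<^sup>2 + (cmod (g x))\<^sup>2"
        by (simp add: power2_eq_square algebra_simps)
      then have h: "(2 * t * (cmod (f x) * cmod (g x))) / (2 * t) \<le> (t * t * (cmod (f x))\<^sup>2 + (cmod (g x))\<^sup>2) / (2 * t)"
        using t by (intro divide_right_mono) auto
      have e1: "(2 * t * (cmod (f x) * cmod (g x))) / (2 * t) = cmod (f x) * cmod (g x)" using t by simp
      have e2: "(t * t * (cmod (f x))\<^sup>2 + (cmod (g x))\<^sup>2) / (2 * t) = (t * (cmod (f x))\<^sup>2 + (cmod (g x))\<^sup>2 / t) / 2"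
        using t by (simp add: field_simps)
      show "cmod (f x) * cmod (g x) \<le> (t * (cmod (f x))\<^sup>2 + (cmod (g x))\<^sup>2 / t) / 2"
        using h e1 e2 by simp
    qed
    also have "\<dots> = (t * A + B / t) / 2"
      using assms by (simp add: A_def B_def L2_def)
    finally show ?thesis .
  qed
  have I0: "0 \<le> I" unfolding I_def by (simp add: integral_nonneg_AE)
  have "I \<le> sqrt A * sqrt B"
  proof (cases "A = 0 \<or> B = 0")
    case True
    show ?thesis
    proof (rule ccontr)
      assume "\<not> ?thesis"
      then have Ip: "I > 0" using True by auto
      show False
      proof (cases "A = 0")
        case True
        have tpos: "0 < B / I + 1" using Ip B0 by (simp add: add_nonneg_pos)
        have "I \<le> (B / (B / I + 1)) / 2" using key[OF tpos] True by simp
        moreover have "B / (B / I + 1) = B * I / (B + I)" using Ip by (simp add: field_simps)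
        ultimately have "I \<le> (B * I / (B + I)) / 2" by simp
        moreover have "B * I / (B + I) \<le> I" using Ip B0 by (simp add: field_simps)
        ultimately show False using Ip
          by (metis add_le_same_cancel1 field_sum_of_halves linorder_not_le order.trans add_le_cancel_left)
      next
        case False
        then have B: "B = 0" using \<open>A = 0 \<or> B = 0\<close> by simp
        have "I \<le> (I / (A + 1) * A) / 2" using key[of "I / (A + 1)"] B Ip A0 by simp
        moreover have "I / (A + 1) * A \<le> I" using Ip A0 by (simp add: field_simps)
        ultimately show False using Ip
          by (metis add_le_same_cancel1 field_sum_of_halves linorder_not_le order.trans add_le_cancel_left)
      qed
    qed
  next
    case False
    then have Ap: "A > 0" and Bp: "B > 0" using A0 B0 by auto
    define t where "t = sqrt B / sqrt A"
    have tp: "t > 0" using Ap Bp by (simp add: t_def)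
    have "I \<le> (t * A + B / t) / 2" by (rule key[OF tp])
    also have "t * A = sqrt A * sqrt B"
    proof -
      have sA: "sqrt A > 0" using Ap by simp
      have "t * A = sqrt B / sqrt A * (sqrt A * sqrt A)" using A0 by (simp add: t_def)
      also have "\<dots> = sqrt A * sqrt B" using sA by (simp add: field_simps)
      finally show ?thesis .
    qed
    also have "B / t = sqrt A * sqrt B"
    proof -
      have sB: "sqrt B > 0" using Bp by simp
      have sA: "sqrt A > 0" using Ap by simp
      have "B / t = (sqrt B * sqrt B) / (sqrt B / sqrt A)" using B0 by (simp add: t_def)
      also have "\<dots> = sqrt A * sqrt B" using sA sB by (simp add: field_simps)
      finally show ?thesis .
    qed
    finally show ?thesis by simp
  qed
  then show ?thesis unfolding I_def A_def B_def nrm_def .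
qed


lemma CS: assumes "L2 f" "L2 g" shows "cmod (ip f g) \<le> nrm f * nrm g"
proof -
  have "cmod (ip f g) \<le> (\<integral>x. norm (f x * cnj (g x)) \<partial>ME)"
    unfolding ip_def by (rule integral_norm_bound)
  also have "\<dots> = (\<integral>x. cmod (f x) * cmod (g x) \<partial>ME)" by (simp add: norm_mult)
  also have "\<dots> \<le> nrm f * nrm g" by (rule CS_real[OF assms])
  finally show ?thesis .
qed

lemma nrm_sq_ip: "(nrm f)\<^sup>2 = Re (ip f f)"
  by (simp add: ip_self)

lemma nrm_triangle: assumes "L2 f" "L2 g" shows "nrm (\<lambda>x. f x + g x) \<le> nrm f + nrm g"
proof -
  have "(nrm (\<lambda>x. f x + g x))\<^sup>2 = Re (ip (\<lambda>x. f x + g x) (\<lambda>x. f x + g x))" by (rule nrm_sq_ip)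
  also have "\<dots> = Re (ip f f) + Re (ip f g) + Re (ip g f) + Re (ip g g)"
    using assms by (simp add: ip_add_left ip_add_right L2_add)
  also have "\<dots> \<le> (nrm f)\<^sup>2 + 2 * (nrm f * nrm g) + (nrm g)\<^sup>2"
  proof -
    have "Re (ip f g) \<le> nrm f * nrm g" using CS[OF assms] complex_Re_le_cmod order_trans by blast
    moreover have "Re (ip g f) \<le> nrm f * nrm g" using CS[OF assms(2,1)] complex_Re_le_cmod order_trans
      by (metis mult.commute)
    ultimately show ?thesis by (simp add: nrm_sq_ip)
  qed
  also have "\<dots> = (nrm f + nrm g)\<^sup>2" by (simp add: power2_sum)
  finally have "(nrm (\<lambda>x. f x + g x))\<^sup>2 \<le> (nrm f + nrm g)\<^sup>2" .
  then show ?thesis by (rule power2_le_imp_le) (use nrm_nonneg[of f] nrm_nonneg[of g] in auto)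
qed

lemma nrm_mult_bound: assumes "L2 f" "h \<in> borel_measurable ME" "\<And>x. x \<in> E \<Longrightarrow> cmod (h x) \<le> B"
  shows "nrm (\<lambda>x. h x * f x) \<le> B * nrm f"
proof -
  have B0: "0 \<le> B" using assms(3)[of "axis 2 1"] by (auto simp: E_def axis_def) (meson norm_ge_zero order_trans)
  have L: "L2 (\<lambda>x. h x * f x)" by (rule L2_mult[OF assms])
  have "(\<integral>x. (cmod (h x * f x))\<^sup>2 \<partial>ME) \<le> (\<integral>x. B\<^sup>2 * (cmod (f x))\<^sup>2 \<partial>ME)"
  proof (rule integral_mono_AE)
    show "integrable ME (\<lambda>x. B\<^sup>2 * (cmod (f x))\<^sup>2)" using assms by (simp add: L2_def)
    show "integrable ME (\<lambda>x. (cmod (h x * f x))\<^sup>2)" using L by (simp add: L2_def)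
    show "AE x in ME. (cmod (h x * f x))\<^sup>2 \<le> B\<^sup>2 * (cmod (f x))\<^sup>2"
    proof (rule AE_I2)
      fix x assume "x \<in> space ME"
      then have x: "x \<in> E" by simp
      have "cmod (h x * f x) \<le> B * cmod (f x)"
        using assms(3)[OF x] by (simp add: norm_mult mult_right_mono)
      then have "(cmod (h x * f x))\<^sup>2 \<le> (B * cmod (f x))\<^sup>2" by (intro power_mono) auto
      then show "(cmod (h x * f x))\<^sup>2 \<le> B\<^sup>2 * (cmod (f x))\<^sup>2" by (simp add: power_mult_distrib)
    qed
  qed
  also have "\<dots> = (B * nrm f)\<^sup>2"
    by (simp add: power_mult_distrib nrm_sq)
  finally have "(nrm (\<lambda>x. h x * f x))\<^sup>2 \<le> (B * nrm f)\<^sup>2" by (simp add: nrm_sq)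
  then show ?thesis by (rule power2_le_imp_le) (use B0 nrm_nonneg[of f] in auto)
qed

lemma nrm_cmult: "nrm (\<lambda>x. c * f x) = cmod c * nrm f"
  unfolding nrm_def by (simp add: norm_mult power_mult_distrib real_sqrt_mult)

lemma nrm_uminus: "nrm (\<lambda>x. - f x) = nrm f"
  unfolding nrm_def by simp

lemma nrm_diff_triangle: assumes "L2 f" "L2 g" shows "nrm (\<lambda>x. f x - g x) \<le> nrm f + nrm g"
  using nrm_triangle[OF assms(1) L2_uminus[OF assms(2)]] by (simp add: nrm_uminus)

lemma nrm_zero_ip: "nrm f = 0 \<longleftrightarrow> ip f f = 0"
  by (simp add: ip_self)

lemma ip_conv_left: assumes "L2_conv \<phi> u" "L2 g" shows "(\<lambda>n. ip (\<phi> n) g) \<longlonglongrightarrow> ip u g"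
proof -
  have L: "\<And>n. L2 (\<phi> n)" "L2 u" and c: "(\<lambda>n. nrm (\<lambda>x. \<phi> n x - u x)) \<longlonglongrightarrow> 0"
    using assms(1) by (auto simp: L2_conv_def)
  have "(\<lambda>n. ip (\<lambda>x. \<phi> n x - u x) g) \<longlonglongrightarrow> 0"
  proof (rule Lim_null_comparison[where g="\<lambda>n. nrm (\<lambda>x. \<phi> n x - u x) * nrm g"])
    show "\<forall>\<^sub>F n in sequentially. norm (ip (\<lambda>x. \<phi> n x - u x) g) \<le> nrm (\<lambda>x. \<phi> n x - u x) * nrm g"
      using CS[OF L2_diff[OF L(1) L(2)] assms(2)] by auto
    show "(\<lambda>n. nrm (\<lambda>x. \<phi> n x - u x) * nrm g) \<longlonglongrightarrow> 0"
      using tendsto_mult[OF c tendsto_const[of "nrm g"]] by simp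
  qed
  then have "(\<lambda>n. ip (\<phi> n) g - ip u g) \<longlonglongrightarrow> 0"
    using L assms(2) by (simp add: ip_diff_left)
  then show ?thesis by (simp add: LIM_zero_cancel)
qed

lemma ip_conv_right: assumes "L2_conv \<phi> u" "L2 g" shows "(\<lambda>n. ip g (\<phi> n)) \<longlonglongrightarrow> ip g u"
proof -
  have "(\<lambda>n. cnj (ip (\<phi> n) g)) \<longlonglongrightarrow> cnj (ip u g)"
    by (intro tendsto_cnj ip_conv_left assms)
  then show ?thesis by (simp add: ip_sym[of g])
qed

lemma L2_conv_L2: "L2_conv \<phi> u \<Longrightarrow> L2 u" "L2_conv \<phi> u \<Longrightarrow> L2 (\<phi> n)"
  by (auto simp: L2_conv_def)


abbreviation ax :: "2 \<Rightarrow> R2" where "ax i \<equiv> axis i 1"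

definition lined :: "(R2 \<Rightarrow> 'b::real_normed_vector) \<Rightarrow> 2 \<Rightarrow> R2 \<Rightarrow> bool" where
  "lined f i x \<longleftrightarrow> (\<lambda>t. f (x + t *\<^sub>R ax i)) differentiable (at 0)"

lemma pdiff_has: "lined f i x \<Longrightarrow> ((\<lambda>t. f (x + t *\<^sub>R ax i)) has_vector_derivative pdiff i f x) (at 0)"
  unfolding lined_def pdiff_def using vector_derivative_works by blast

lemma pdiff_eqI: assumes "((\<lambda>t. f (x + t *\<^sub>R ax i)) has_vector_derivative D) (at 0)"
  shows "lined f i x" "pdiff i f x = D"
  using assms unfolding lined_def pdiff_def
  by (auto intro: differentiableI_vector vector_derivative_at)

lemma line_shift: assumes "lined f i (x + t *\<^sub>R ax i)"
  shows "((\<lambda>s. f (x + s *\<^sub>R ax i)) has_vector_derivative pdiff i f (x + t *\<^sub>R ax i)) (at t)"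
proof -
  have g: "((\<lambda>r. f ((x + t *\<^sub>R ax i) + r *\<^sub>R ax i)) has_vector_derivative pdiff i f (x + t *\<^sub>R ax i)) (at ((\<lambda>s. s - t) t))"
    using pdiff_has[OF assms] by simp
  have h: "((\<lambda>s. s - t) has_vector_derivative 1) (at t)"
    by (auto intro!: derivative_eq_intros)
  have "((\<lambda>r. f ((x + t *\<^sub>R ax i) + r *\<^sub>R ax i)) \<circ> (\<lambda>s. s - t) has_vector_derivative 1 *\<^sub>R pdiff i f (x + t *\<^sub>R ax i)) (at t)"
    by (rule vector_diff_chain_at[OF h g])
  moreover have "((\<lambda>r. f ((x + t *\<^sub>R ax i) + r *\<^sub>R ax i)) \<circ> (\<lambda>s. s - t)) = (\<lambda>s. f (x + s *\<^sub>R ax i))"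
    by (rule ext) (simp add: algebra_simps scaleR_diff_left)
  ultimately show ?thesis by simp
qed

lemma open_line: "open S \<Longrightarrow> open {t::real. x + t *\<^sub>R ax i \<in> S}"
  using continuous_open_vimage[of S "\<lambda>t::real. x + t *\<^sub>R ax i"]
  by (auto simp: vimage_def intro: continuous_intros)

lemma pdiff_local: assumes "open S" "x \<in> S" "\<And>y. y \<in> S \<Longrightarrow> f y = g y" "lined f i x"
  shows "lined g i x" "pdiff i g x = pdiff i f x"
proof -
  have "((\<lambda>t. g (x + t *\<^sub>R ax i)) has_vector_derivative pdiff i f x) (at 0)"
    by (rule has_vector_derivative_transform_within_open[OF pdiff_has[OF assms(4)] open_line[OF assms(1)]])
       (use assms in auto)
  then show "lined g i x" "pdiff i g x = pdiff i f x" by (auto dest: pdiff_eqI)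
qed

lemma pdiff_const: "lined (\<lambda>y. c) i x" "pdiff i (\<lambda>y. c) x = 0"
proof -
  have d: "((\<lambda>t. c) has_vector_derivative 0) (at 0)" by (rule has_vector_derivative_const)
  show "lined (\<lambda>y. c) i x" by (rule pdiff_eqI(1)[of "\<lambda>y. c"]) (rule d)
  show "pdiff i (\<lambda>y. c) x = 0" by (rule pdiff_eqI(2)[of "\<lambda>y. c"]) (rule d)
qed

lemma pdiff_zero_local: fixes f :: "R2 \<Rightarrow> 'b::real_normed_vector" assumes "open S" "x \<in> S" "\<And>y. y \<in> S \<Longrightarrow> f y = 0"
  shows "lined f i x" "pdiff i f x = 0"
proof -
  have l0: "lined (\<lambda>y. 0::'b) i x" and p0: "pdiff i (\<lambda>y. 0::'b) x = 0" by (rule pdiff_const)+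
  have e: "\<And>y. y \<in> S \<Longrightarrow> (\<lambda>y. 0::'b) y = f y" using assms(3) by simp
  show "lined f i x" by (rule pdiff_local(1)[OF assms(1,2) e l0])
  show "pdiff i f x = 0" using pdiff_local(2)[OF assms(1,2) e l0] p0 by simp
qed

lemma pdiff_add: fixes f g :: "R2 \<Rightarrow> 'b::real_normed_vector" assumes "lined f i x" "lined g i x"
  shows "lined (\<lambda>y. f y + g y) i x" "pdiff i (\<lambda>y. f y + g y) x = pdiff i f x + pdiff i g x"
  using has_vector_derivative_add[OF pdiff_has[OF assms(1)] pdiff_has[OF assms(2)]]
  by (auto dest: pdiff_eqI)

lemma pdiff_diff: fixes f g :: "R2 \<Rightarrow> 'b::real_normed_vector" assumes "lined f i x" "lined g i x"
  shows "lined (\<lambda>y. f y - g y) i x" "pdiff i (\<lambda>y. f y - g y) x = pdiff i f x - pdiff i g x"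
  using has_vector_derivative_diff[OF pdiff_has[OF assms(1)] pdiff_has[OF assms(2)]]
  by (auto dest: pdiff_eqI)

lemma pdiff_mult: fixes f g :: cfun assumes "lined f i x" "lined g i x"
  shows "lined (\<lambda>y. f y * g y) i x" "pdiff i (\<lambda>y. f y * g y) x = pdiff i f x * g x + f x * pdiff i g x"
  using has_vector_derivative_mult[OF pdiff_has[OF assms(1)] pdiff_has[OF assms(2)]]
  by (auto dest: pdiff_eqI simp: algebra_simps)

lemma pdiff_cnj: fixes f :: cfun assumes "lined f i x"
  shows "lined (\<lambda>y. cnj (f y)) i x" "pdiff i (\<lambda>y. cnj (f y)) x = cnj (pdiff i f x)"
  using has_vector_derivative_cnj[OF pdiff_has[OF assms(1)]]
  by (auto dest: pdiff_eqI)

lemma pdiff_of_real: fixes f :: "R2 \<Rightarrow> real" assumes "lined f i x"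
  shows "lined (\<lambda>y. complex_of_real (f y)) i x" "pdiff i (\<lambda>y. complex_of_real (f y)) x = complex_of_real (pdiff i f x)"
proof -
  have "((\<lambda>t. f (x + t *\<^sub>R ax i)) has_field_derivative pdiff i f x) (at 0)"
    using pdiff_has[OF assms] by (simp add: has_real_derivative_iff_has_vector_derivative)
  from has_vector_derivative_of_real[OF this]
  show "lined (\<lambda>y. complex_of_real (f y)) i x" "pdiff i (\<lambda>y. complex_of_real (f y)) x = complex_of_real (pdiff i f x)"
    by (auto dest: pdiff_eqI)
qed

lemma pdiff_comp: fixes F :: "R2 \<Rightarrow> real^2" assumes "lined F i x"
  shows "lined (\<lambda>y. F y $ j) i x" "pdiff i (\<lambda>y. F y $ j) x = pdiff i F x $ j"
  using bounded_linear.has_vector_derivative[OF bounded_linear_vec_nth pdiff_has[OF assms], of j]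
  by (auto dest: pdiff_eqI)

lemma pdiff_coord: "lined (\<lambda>y. y $ j) i x" "pdiff i (\<lambda>y. y $ j) x = ax i $ j"
proof -
  have "((\<lambda>t. (x + t *\<^sub>R ax i) $ j) has_vector_derivative ax i $ j) (at 0)"
    by (auto intro!: derivative_eq_intros)
  then show "lined (\<lambda>y. y $ j) i x" "pdiff i (\<lambda>y. y $ j) x = ax i $ j"
    by (rule pdiff_eqI(1)[of "\<lambda>y. y $ j"], rule pdiff_eqI(2)[of "\<lambda>y. y $ j"])
qed

definition C1on :: "R2 set \<Rightarrow> cfun \<Rightarrow> bool" where
  "C1on S f \<longleftrightarrow> continuous_on S f \<and> (\<forall>i. \<forall>x\<in>S. lined f i x) \<and> (\<forall>i. continuous_on S (pdiff i f))"

lemma C1onD: "C1on S f \<Longrightarrow> continuous_on S f" "C1on S f \<Longrightarrow> x \<in> S \<Longrightarrow> lined f i x"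
  "C1on S f \<Longrightarrow> continuous_on S (pdiff i f)"
  by (auto simp: C1on_def)

lemma C1on_subset: "C1on S f \<Longrightarrow> T \<subseteq> S \<Longrightarrow> C1on T f"
  by (auto simp: C1on_def intro: continuous_on_subset)

lemma C1on_cong: assumes "open S" "C1on S f" "\<And>y. y \<in> S \<Longrightarrow> f y = g y"
  shows "C1on S g"
proof -
  have p: "lined g i x \<and> pdiff i g x = pdiff i f x" if "x \<in> S" for i x
    using pdiff_local[OF assms(1) that assms(3)] C1onD(2)[OF assms(2) that] by auto
  show ?thesis unfolding C1on_def
  proof (intro conjI allI ballI)
    show "continuous_on S g" using C1onD(1)[OF assms(2)] assms(3) by (simp cong: continuous_on_cong)
    show "lined g i x" if "x \<in> S" for i x using p[OF that] by simp
    show "continuous_on S (pdiff i g)" for i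
      using C1onD(3)[OF assms(2), of i] p by (simp cong: continuous_on_cong)
  qed
qed

lemma C1on_glue: "open S \<Longrightarrow> open T \<Longrightarrow> C1on S f \<Longrightarrow> C1on T f \<Longrightarrow> C1on (S \<union> T) f"
  unfolding C1on_def by (auto intro: continuous_on_open_Un)

lemma C1on_const: "C1on S (\<lambda>y. c)"
proof -
  have "pdiff i (\<lambda>y. c) = (\<lambda>x. 0)" for i by (rule ext, rule pdiff_const(2))
  then show ?thesis unfolding C1on_def using pdiff_const(1) by auto
qed

lemma C1on_add: assumes "C1on S f" "C1on S g" shows "C1on S (\<lambda>y. f y + g y)"
  unfolding C1on_def
proof (intro conjI allI ballI)
  show "continuous_on S (\<lambda>y. f y + g y)" using assms by (auto simp: C1on_def intro: continuous_intros)
  show "lined (\<lambda>y. f y + g y) i x" if "x \<in> S" for i x using assms that by (auto simp: C1on_def intro: pdiff_add(1))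
  show "continuous_on S (pdiff i (\<lambda>y. f y + g y))" for i
  proof -
    have c: "continuous_on S (pdiff i f)" "continuous_on S (pdiff i g)" "continuous_on S f" "continuous_on S g"
      using assms by (auto simp: C1on_def)
    have "continuous_on S (\<lambda>y. pdiff i f y + pdiff i g y)" using c by (intro continuous_intros)
    then show ?thesis by (rule continuous_on_eq) (use assms in \<open>auto simp: C1on_def intro!: pdiff_add(2)[symmetric]\<close>)
  qed
qed

lemma C1on_diff: assumes "C1on S f" "C1on S g" shows "C1on S (\<lambda>y. f y - g y)"
  unfolding C1on_def
proof (intro conjI allI ballI)
  show "continuous_on S (\<lambda>y. f y - g y)" using assms by (auto simp: C1on_def intro: continuous_intros)
  show "lined (\<lambda>y. f y - g y) i x" if "x \<in> S" for i x using assms that by (auto simp: C1on_def intro: pdiff_diff(1))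
  show "continuous_on S (pdiff i (\<lambda>y. f y - g y))" for i
  proof -
    have c: "continuous_on S (pdiff i f)" "continuous_on S (pdiff i g)" "continuous_on S f" "continuous_on S g"
      using assms by (auto simp: C1on_def)
    have "continuous_on S (\<lambda>y. pdiff i f y - pdiff i g y)" using c by (intro continuous_intros)
    then show ?thesis by (rule continuous_on_eq) (use assms in \<open>auto simp: C1on_def intro!: pdiff_diff(2)[symmetric]\<close>)
  qed
qed

lemma C1on_mult: assumes "C1on S f" "C1on S g" shows "C1on S (\<lambda>y. f y * g y)"
  unfolding C1on_def
proof (intro conjI allI ballI)
  show "continuous_on S (\<lambda>y. f y * g y)" using assms by (auto simp: C1on_def intro: continuous_intros)
  show "lined (\<lambda>y. f y * g y) i x" if "x \<in> S" for i x using assms that by (auto simp: C1on_def intro: pdiff_mult(1))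
  show "continuous_on S (pdiff i (\<lambda>y. f y * g y))" for i
  proof -
    have c: "continuous_on S (pdiff i f)" "continuous_on S (pdiff i g)" "continuous_on S f" "continuous_on S g"
      using assms by (auto simp: C1on_def)
    have "continuous_on S (\<lambda>y. pdiff i f y * g y + f y * pdiff i g y)" using c by (intro continuous_intros)
    then show ?thesis by (rule continuous_on_eq) (use assms in \<open>auto simp: C1on_def intro!: pdiff_mult(2)[symmetric]\<close>)
  qed
qed

lemma C1on_cnj: assumes "C1on S f" shows "C1on S (\<lambda>y. cnj (f y))"
  unfolding C1on_def
proof (intro conjI allI ballI)
  show "continuous_on S (\<lambda>y. cnj (f y))" using assms by (auto simp: C1on_def intro: continuous_intros)
  show "lined (\<lambda>y. cnj (f y)) i x" if "x \<in> S" for i x using assms that by (auto simp: C1on_def intro: pdiff_cnj(1))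
  show "continuous_on S (pdiff i (\<lambda>y. cnj (f y)))" for i
  proof -
    have "continuous_on S (\<lambda>y. cnj (pdiff i f y))" using assms by (auto simp: C1on_def intro: continuous_intros)
    then show ?thesis by (rule continuous_on_eq) (use assms in \<open>auto simp: C1on_def intro!: pdiff_cnj(2)[symmetric]\<close>)
  qed
qed


lemma smooth_onD: "smooth_on S f \<Longrightarrow> continuous_on S (iter_pd ks f)"
  "smooth_on S f \<Longrightarrow> x \<in> S \<Longrightarrow> lined (iter_pd ks f) i x"
  by (auto simp: smooth_on_def lined_def)

lemma iter_pd_comp: fixes F :: "R2 \<Rightarrow> real^2" assumes "smooth_on UNIV F"
  shows "iter_pd ks (\<lambda>y. F y $ j) = (\<lambda>y. iter_pd ks F y $ j)"
proof (induction ks)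
  case Nil then show ?case by simp
next
  case (Cons i ks)
  show ?case
  proof (rule ext)
    fix x
    have "iter_pd (i # ks) (\<lambda>y. F y $ j) x = pdiff i (\<lambda>y. iter_pd ks F y $ j) x" using Cons by simp
    also have "\<dots> = pdiff i (iter_pd ks F) x $ j"
      by (rule pdiff_comp(2)[OF smooth_onD(2)[OF assms]]) simp
    finally show "iter_pd (i # ks) (\<lambda>y. F y $ j) x = iter_pd (i # ks) F x $ j" by simp
  qed
qed

lemma smooth_comp: fixes F :: "R2 \<Rightarrow> real^2" assumes "smooth_on UNIV F"
  shows "smooth_on UNIV (\<lambda>y. F y $ j)"
  unfolding smooth_on_def iter_pd_comp[OF assms]
proof (intro allI conjI ballI)
  fix ks i and x :: R2
  show "continuous_on UNIV (\<lambda>y. iter_pd ks F y $ j)"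
    using smooth_onD(1)[OF assms] by (intro continuous_intros)
  show "(\<lambda>t. iter_pd ks F (x + t *\<^sub>R axis i 1) $ j) differentiable at 0"
    using pdiff_comp(1)[OF smooth_onD(2)[OF assms, of x ks i], of j] by (simp add: lined_def)
qed

lemma bounded_comp: fixes F :: "R2 \<Rightarrow> real^2" assumes "BC_inf F"
  shows "BC_inf (\<lambda>y. F y $ j)"
proof -
  have s: "smooth_on UNIV F" using assms by (simp add: BC_inf_def)
  have "bounded (range (\<lambda>y. iter_pd ks F y $ j))" for ks
  proof -
    have "bounded (range (iter_pd ks F))" using assms by (simp add: BC_inf_def)
    then obtain B where "\<forall>y\<in>range (iter_pd ks F). norm y \<le> B" unfolding bounded_iff by blast
    then have B: "\<And>y. norm (iter_pd ks F y) \<le> B" by auto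
    show ?thesis unfolding bounded_iff
      by (intro exI[of _ B]) (auto intro: order_trans[OF component_le_norm_cart B])
  qed
  then show ?thesis unfolding BC_inf_def using smooth_comp[OF s] iter_pd_comp[OF s] by simp
qed

definition cof :: "(R2 \<Rightarrow> real) \<Rightarrow> cfun" where "cof g = (\<lambda>y. complex_of_real (g y))"

lemma C1_real: fixes g :: "R2 \<Rightarrow> real" assumes "smooth_on UNIV g"
  shows "C1on S (cof (iter_pd ks g))"
proof -
  have p: "lined (cof (iter_pd ks g)) i x \<and> pdiff i (cof (iter_pd ks g)) x = cof (iter_pd (i # ks) g) x" for i x
    using pdiff_of_real[OF smooth_onD(2)[OF assms, of x ks i]] by (simp add: cof_def)
  then have pp: "pdiff i (cof (iter_pd ks g)) = cof (iter_pd (i # ks) g)" for i by auto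
  have c: "continuous_on S (cof (iter_pd ks' g))" for ks'
    unfolding cof_def using smooth_onD(1)[OF assms, of ks'] continuous_on_subset[of UNIV] 
    by (intro continuous_intros) auto
  show ?thesis unfolding C1on_def pp using p c[of ks] c[of "i # ks" for i] by auto
qed

lemma C1_real0: fixes g :: "R2 \<Rightarrow> real" assumes "smooth_on UNIV g"
  shows "C1on S (\<lambda>y. complex_of_real (g y))"
  using C1_real[OF assms, of S "[]"] by (simp add: cof_def)

lemma C1_real1: fixes g :: "R2 \<Rightarrow> real" assumes "smooth_on UNIV g"
  shows "C1on S (\<lambda>y. complex_of_real (pdiff i g y))"
  using C1_real[OF assms, of S "[i]"] by (simp add: cof_def)

lemma C1_coord: "C1on S (\<lambda>y. complex_of_real (y $ j))"
proof -
  have p: "lined (\<lambda>y. complex_of_real (y $ j)) i x \<and> pdiff i (\<lambda>y. complex_of_real (y $ j)) x = complex_of_real (ax i $ j)" for i x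
    using pdiff_of_real[OF pdiff_coord(1)] pdiff_coord(2) by simp
  then have "pdiff i (\<lambda>y. complex_of_real (y $ j)) = (\<lambda>x. complex_of_real (ax i $ j))" for i by auto
  then show ?thesis unfolding C1on_def using p by (auto intro!: continuous_intros)
qed

lemma Cc_C1: assumes "u \<in> Cc" shows "C1on E u" "C1on E (pdiff j u)"
proof -
  have s: "smooth_on E u" using assms by (simp add: Cc_def)
  have "continuous_on E (iter_pd [] u)" "continuous_on E (iter_pd [i] u)" "continuous_on E (iter_pd [i, j] u)"
    "\<And>x. x \<in> E \<Longrightarrow> lined (iter_pd [] u) i x" "\<And>x. x \<in> E \<Longrightarrow> lined (iter_pd [j] u) i x" for i
    using smooth_onD[OF s] by blast+
  then show "C1on E u" "C1on E (pdiff j u)" unfolding C1on_def by auto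
qed

lemma Cc_supp: assumes "u \<in> Cc"
  obtains a where "a > 0" "\<And>x. x \<in> E \<Longrightarrow> (a \<le> \<bar>x $ 1\<bar> \<or> a \<le> x $ 2) \<Longrightarrow> u x = 0"
proof -
  obtain a where a: "a > 0" "\<forall>x\<in>E. \<not> (- a < x $ 1 \<and> x $ 1 < a \<and> x $ 2 < a) \<longrightarrow> u x = 0"
    using assms by (auto simp: Cc_def)
  show ?thesis by (rule that[OF a(1)]) (use a(2) in force)
qed

lemma Cc_supp_d: assumes "u \<in> Cc"
  obtains a where "a > 0" "\<And>x. x \<in> E \<Longrightarrow> (a < \<bar>x $ 1\<bar> \<or> a < x $ 2) \<Longrightarrow> u x = 0"
    "\<And>x j. x \<in> E \<Longrightarrow> (a < \<bar>x $ 1\<bar> \<or> a < x $ 2) \<Longrightarrow> pdiff j u x = 0"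
proof -
  obtain a where a: "a > 0" "\<And>x. x \<in> E \<Longrightarrow> (a \<le> \<bar>x $ 1\<bar> \<or> a \<le> x $ 2) \<Longrightarrow> u x = 0"
    using Cc_supp[OF assms] by blast
  define S where "S = E \<inter> ({y. a < y $ 1} \<union> {y. y $ 1 < - a} \<union> {y. a < y $ 2})"
  have oS: "open S" unfolding S_def E_def
    by (intro open_Int open_Un; auto intro!: open_Collect_less continuous_intros)
  have pd: "pdiff j u x = 0" if "x \<in> E" "a < \<bar>x $ 1\<bar> \<or> a < x $ 2" for x j
  proof (rule pdiff_zero_local(2)[OF oS])
    show "x \<in> S" using that by (auto simp: S_def)
    show "u y = 0" if "y \<in> S" for y
    proof -
      have "y \<in> E" "a \<le> \<bar>y $ 1\<bar> \<or> a \<le> y $ 2" using that by (auto simp: S_def abs_if)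
      then show ?thesis by (rule a(2))
    qed
  qed
  have z: "u x = 0" if "x \<in> E" "a < \<bar>x $ 1\<bar> \<or> a < x $ 2" for x
    by (rule a(2)) (use that in auto)
  show ?thesis by (rule that[OF a(1) z pd])
qed


lemma diff_quot_seq:
  fixes g :: "real \<Rightarrow> complex"
  assumes "(g has_vector_derivative D) (at 0)"
  shows "(\<lambda>n. of_real (real (Suc n)) * (g (1 / real (Suc n)) - g 0)) \<longlonglongrightarrow> D"
proof -
  have "((\<lambda>y. norm ((g y - g 0) - y *\<^sub>R D) / norm (y - 0)) \<longlongrightarrow> 0) (at 0)"
    using assms unfolding has_vector_derivative_def has_derivative_iff_norm by simp
  then have all: "\<forall>X. (\<forall>i. X i \<in> UNIV - {0}) \<longrightarrow> X \<longlonglongrightarrow> 0 \<longrightarrow> ((\<lambda>y. norm ((g y - g 0) - y *\<^sub>R D) / norm (y - 0)) \<circ> X) \<longlonglongrightarrow> 0"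
    unfolding tendsto_at_iff_sequentially .
  have s: "(\<lambda>n. 1 / real (Suc n)) \<longlonglongrightarrow> 0"
    using LIMSEQ_Suc[OF lim_1_over_n] by simp
  have lim: "((\<lambda>y. norm ((g y - g 0) - y *\<^sub>R D) / norm (y - 0)) \<circ> (\<lambda>n. 1 / real (Suc n))) \<longlonglongrightarrow> 0"
    using all[rule_format, of "\<lambda>n. 1 / real (Suc n)"] s by simp
  have eq: "((\<lambda>y. norm ((g y - g 0) - y *\<^sub>R D) / norm (y - 0)) \<circ> (\<lambda>n. 1 / real (Suc n))) n
      = norm (of_real (real (Suc n)) * (g (1 / real (Suc n)) - g 0) - D)" for n
  proof -
    have "norm ((g (1 / real (Suc n)) - g 0) - (1 / real (Suc n)) *\<^sub>R D) / norm (1 / real (Suc n))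
        = norm ((g (1 / real (Suc n)) - g 0) - (1 / real (Suc n)) *\<^sub>R D) * real (Suc n)"
      by (simp add: divide_simps)
    also have "\<dots> = norm (of_real (real (Suc n)) * ((g (1 / real (Suc n)) - g 0) - (1 / real (Suc n)) *\<^sub>R D))"
      by (simp only: norm_mult norm_of_real abs_of_nonneg[OF of_nat_0_le_iff] mult.commute)
    also have "of_real (real (Suc n)) * ((g (1 / real (Suc n)) - g 0) - (1 / real (Suc n)) *\<^sub>R D)
        = of_real (real (Suc n)) * (g (1 / real (Suc n)) - g 0) - D"
      by (simp add: scaleR_conv_of_real right_diff_distrib del: of_nat_Suc)
    finally show ?thesis by simp
  qed
  have "(\<lambda>n. norm (of_real (real (Suc n)) * (g (1 / real (Suc n)) - g 0) - D)) \<longlonglongrightarrow> 0"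
  proof -
    have "(\<lambda>n. norm (of_real (real (Suc n)) * (g (1 / real (Suc n)) - g 0) - D))
        = ((\<lambda>y. norm ((g y - g 0) - y *\<^sub>R D) / norm (y - 0)) \<circ> (\<lambda>n. 1 / real (Suc n)))"
      by (rule ext) (rule eq[symmetric])
    then show ?thesis using lim by (simp only:)
  qed
  then show ?thesis using tendsto_norm_zero_iff LIM_zero_cancel by blast
qed


lemma cont_borel: "continuous_on UNIV (f :: R2 \<Rightarrow> 'b::{banach, second_countable_topology}) \<Longrightarrow> f \<in> borel_measurable lborel"
  using borel_measurable_continuous_onI by (simp add: measurable_lborel1)

lemma integrable_cont_supp:
  fixes f :: "R2 \<Rightarrow> 'b::{banach, second_countable_topology}"
  assumes "continuous_on UNIV f" "\<And>x. R < norm x \<Longrightarrow> f x = 0"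
  shows "integrable lborel f"
proof -
  have "integrable lborel (\<lambda>x. indicator (cball 0 R) x *\<^sub>R f x)"
    by (rule borel_integrable_compact) (use assms(1) continuous_on_subset in auto)
  moreover have "(\<lambda>x. indicator (cball 0 R) x *\<^sub>R f x) = f"
    using assms(2) by (auto simp: indicator_def fun_eq_iff not_le)
  ultimately show ?thesis by simp
qed

lemma cont_bound:
  fixes f :: "R2 \<Rightarrow> 'b::real_normed_vector"
  assumes "continuous_on UNIV f" "\<And>x. R < norm x \<Longrightarrow> f x = 0"
  obtains M where "M > 0" "\<And>x. norm (f x) \<le> M"
proof -
  have "compact (f ` cball 0 R)" by (rule compact_continuous_image) (use assms(1) continuous_on_subset in auto)
  then have "bounded (f ` cball 0 R)" by (rule compact_imp_bounded)
  then obtain M where M: "M > 0" "\<And>y. y \<in> f ` cball 0 R \<Longrightarrow> norm y \<le> M" by (auto simp: bounded_pos)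
  have "norm (f x) \<le> M" for x
  proof (cases "R < norm x")
    case True then show ?thesis using assms(2) M(1) by simp
  next
    case False then show ?thesis using M(2)[of "f x"] by auto
  qed
  then show ?thesis using that M(1) by blast
qed

lemma shift_integral:
  fixes F :: "R2 \<Rightarrow> complex"
  assumes "F \<in> borel_measurable borel"
  shows "integral\<^sup>L lborel (\<lambda>x. F (x + c)) = integral\<^sup>L lborel F"
proof -
  have m: "(+) c \<in> measurable lborel borel" by simp
  have "integral\<^sup>L lborel F = integral\<^sup>L (distr lborel borel ((+) c)) F" by (simp add: lborel_distr_plus)
  also have "\<dots> = integral\<^sup>L lborel (\<lambda>x. F (c + x))" by (rule integral_distr[OF m assms])
  finally show ?thesis by (simp add: add.commute)
qed

lemma ibp0:
  fixes F :: cfun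
  assumes C: "C1on UNIV F" and supp: "\<And>x. R < norm x \<Longrightarrow> F x = 0"
  shows "integrable lborel (pdiff j F)" "integral\<^sup>L lborel (pdiff j F) = 0"
proof -
  define e where "e = ax j"
  have ne: "norm e = 1" by (simp add: e_def)
  have cF: "continuous_on UNIV F" using C by (simp add: C1on_def)
  have cD: "continuous_on UNIV (pdiff j F)" using C by (simp add: C1on_def)
  have Dz: "pdiff j F x = 0" if "R < norm x" for x
  proof (rule pdiff_zero_local(2))
    show "open {y. R < norm y}" by (intro open_Collect_less continuous_intros)
  qed (use that supp in auto)
  show intD: "integrable lborel (pdiff j F)" by (rule integrable_cont_supp[OF cD Dz])
  obtain M where M: "M > 0" "\<And>x. norm (pdiff j F x) \<le> M" using cont_bound[OF cD Dz] by blast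
  have mF: "F \<in> borel_measurable borel" using cF by (rule borel_measurable_continuous_onI)
  define h where "h n = 1 / real (Suc n)" for n
  have h: "0 < h n" "h n \<le> 1" for n by (auto simp: h_def)
  define Q where "Q n x = of_real (real (Suc n)) * (F (x + h n *\<^sub>R e) - F x)" for n x
  have intF: "integrable lborel F" by (rule integrable_cont_supp[OF cF supp])
  have intFs: "integrable lborel (\<lambda>x. F (x + c))" for c
  proof (rule integrable_cont_supp)
    show "continuous_on UNIV (\<lambda>x. F (x + c))" using cF by (auto intro!: continuous_on_compose2[OF cF] continuous_intros)
    show "F (x + c) = 0" if "R + norm c < norm x" for x
    proof (rule supp)
      have "norm x \<le> norm (x + c) + norm c" using norm_triangle_ineq4[of "x + c" c] by simp
      then show "R < norm (x + c)" using that by simp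
    qed
  qed
  have IQ: "integral\<^sup>L lborel (Q n) = 0" for n
  proof -
    have "integral\<^sup>L lborel (Q n) = of_real (real (Suc n)) * (integral\<^sup>L lborel (\<lambda>x. F (x + h n *\<^sub>R e)) - integral\<^sup>L lborel F)"
      unfolding Q_def using intF intFs by simp
    also have "\<dots> = 0" using shift_integral[OF mF] by simp
    finally show ?thesis .
  qed
  have lim: "(\<lambda>n. Q n x) \<longlonglongrightarrow> pdiff j F x" for x
  proof -
    have "((\<lambda>t. F (x + t *\<^sub>R e)) has_vector_derivative pdiff j F x) (at 0)"
      unfolding e_def by (rule pdiff_has) (use C in \<open>auto simp: C1on_def\<close>)
    from diff_quot_seq[OF this] show ?thesis by (simp add: Q_def h_def)
  qed
  have bound: "norm (Q n x) \<le> M * indicator (cball 0 (R + 1)) x" for n x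
  proof (cases "x \<in> cball 0 (R + 1)")
    case False
    then have "R + 1 < norm x" by simp
    moreover have "norm x \<le> norm (x + h n *\<^sub>R e) + h n"
      using norm_triangle_ineq4[of "x + h n *\<^sub>R e" "h n *\<^sub>R e"] h[of n] ne by simp
    ultimately have "F (x + h n *\<^sub>R e) = 0" "F x = 0" using h[of n] by (auto intro!: supp)
    then show ?thesis using False by (simp add: Q_def)
  next
    case True
    define g where "g t = F (x + t *\<^sub>R e)" for t
    have dg: "(g has_derivative (\<lambda>s. s *\<^sub>R pdiff j F (x + t *\<^sub>R e))) (at t)" for t
    proof -
      have "lined F j (x + t *\<^sub>R ax j)" using C by (simp add: C1on_def)
      moreover have "g = (\<lambda>s. F (x + s *\<^sub>R ax j))" by (simp add: g_def e_def fun_eq_iff)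
      ultimately show ?thesis using line_shift by (simp add: e_def has_vector_derivative_def)
    qed
    have cg: "continuous_on {0..h n} g" unfolding g_def
      by (intro continuous_on_compose2[OF cF] continuous_intros) auto
    obtain t where "norm (g (h n) - g 0) \<le> norm ((h n) *\<^sub>R pdiff j F (x + t *\<^sub>R e))"
      using mvt_general[OF h(1) cg dg] by auto
    also have "\<dots> \<le> h n * M" using M(2) h[of n] by (simp add: mult_left_mono)
    finally have "norm (g (h n) - g 0) \<le> h n * M" .
    then have "norm (Q n x) \<le> real (Suc n) * (h n * M)"
      by (simp add: Q_def g_def norm_mult mult_left_mono del: of_nat_Suc)
    also have "\<dots> = M" by (simp add: h_def)
    finally show ?thesis using True by simp
  qed
  have "(\<lambda>n. integral\<^sup>L lborel (Q n)) \<longlonglongrightarrow> integral\<^sup>L lborel (pdiff j F)"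
  proof (rule integral_dominated_convergence[where w="\<lambda>x. M * indicator (cball 0 (R + 1)) x"])
    show "pdiff j F \<in> borel_measurable lborel" by (rule cont_borel[OF cD])
    show "Q n \<in> borel_measurable lborel" for n
      unfolding Q_def by (rule cont_borel) (intro continuous_intros continuous_on_compose2[OF cF]; auto)
    have "integrable lborel (\<lambda>x. indicator (cball 0 (R + 1)) x *\<^sub>R M)"
      by (rule borel_integrable_compact) auto
    then show "integrable lborel (\<lambda>x. M * indicator (cball 0 (R + 1)) x)" by (simp add: mult.commute)
    show "AE x in lborel. (\<lambda>n. Q n x) \<longlonglongrightarrow> pdiff j F x" using lim by simp
    show "AE x in lborel. norm (Q n x) \<le> M * indicator (cball 0 (R + 1)) x" for n using bound by simp
  qed
  then show "integral\<^sup>L lborel (pdiff j F) = 0" using IQ LIMSEQ_unique by (simp add: LIMSEQ_const_iff)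
qed


definition ext0 :: "cfun \<Rightarrow> cfun" where "ext0 f = (\<lambda>x. if x \<in> E then f x else 0)"

lemma EO_UNIV: "\<delta> > 0 \<Longrightarrow> E \<union> {x. x $ 2 < \<delta>} = UNIV"
  by (auto simp: E_def)

lemma open_O: "open {x::R2. x $ 2 < \<delta>}"
  by (intro open_Collect_less continuous_intros)

lemma ext0_cont:
  assumes "continuous_on E f" "\<delta> > 0" "\<And>x. x \<in> E \<Longrightarrow> x $ 2 < \<delta> \<Longrightarrow> f x = 0"
  shows "continuous_on UNIV (ext0 f)"
proof -
  have "continuous_on (E \<union> {x. x $ 2 < \<delta>}) (ext0 f)"
  proof (rule continuous_on_open_Un[OF E_open open_O])
    show "continuous_on E (ext0 f)" by (rule continuous_on_eq[OF assms(1)]) (simp add: ext0_def)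
    show "continuous_on {x. x $ 2 < \<delta>} (ext0 f)"
      by (rule continuous_on_eq[OF continuous_on_const[of _ 0]]) (use assms(3) in \<open>auto simp: ext0_def\<close>)
  qed
  then show ?thesis using EO_UNIV[OF assms(2)] by simp
qed

lemma int_E:
  assumes "continuous_on UNIV (ext0 h)" "\<And>x. R < norm x \<Longrightarrow> ext0 h x = 0"
  shows "integrable ME h" "integral\<^sup>L ME h = integral\<^sup>L lborel (ext0 h)"
proof -
  have sE: "E \<inter> space lebesgue \<in> sets lebesgue" using E_sets by simp
  have eq: "(\<lambda>x. indicator E x *\<^sub>R h x) = ext0 h" by (auto simp: ext0_def fun_eq_iff)
  have m: "ext0 h \<in> borel_measurable lborel" by (rule cont_borel[OF assms(1)])
  have i: "integrable lborel (ext0 h)" by (rule integrable_cont_supp[OF assms])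
  show "integrable ME h"
    unfolding integrable_restrict_space[OF sE] eq using integrable_completion[OF m[unfolded measurable_lborel1]] i
    by (simp add: measurable_lborel1)
  show "integral\<^sup>L ME h = integral\<^sup>L lborel (ext0 h)"
    unfolding integral_restrict_space[OF sE] eq using integral_completion[OF m[unfolded measurable_lborel1]]
    by (simp add: measurable_lborel1)
qed

lemma ibp_Cc:
  assumes psi: "\<psi> \<in> Cc" and C: "C1on UNIV \<beta>" and d: "\<delta> > 0"
    and supp: "\<And>x. x $ 2 < \<delta> \<or> R < norm x \<Longrightarrow> \<beta> x = 0"
  shows "integrable ME (\<lambda>x. pdiff j \<psi> x * \<beta> x)" "integrable ME (\<lambda>x. \<psi> x * pdiff j \<beta> x)"
    "integral\<^sup>L ME (\<lambda>x. pdiff j \<psi> x * \<beta> x) = - integral\<^sup>L ME (\<lambda>x. \<psi> x * pdiff j \<beta> x)"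
proof -
  define Ob where "Ob = {x::R2. x $ 2 < \<delta>}"
  have oO: "open Ob" unfolding Ob_def by (rule open_O)
  have U: "E \<union> Ob = UNIV" unfolding Ob_def by (rule EO_UNIV[OF d])
  define F where "F x = \<psi> x * \<beta> x" for x
  have bz: "\<beta> x = 0" if "x \<in> Ob" for x using supp that by (auto simp: Ob_def)
  have dbz: "pdiff j \<beta> x = 0" if "x \<in> Ob \<or> R < norm x" for x
  proof (cases "x \<in> Ob")
    case True show ?thesis by (rule pdiff_zero_local(2)[OF oO True]) (rule bz)
  next
    case False
    then have "R < norm x" using that by simp
    then show ?thesis
      by (intro pdiff_zero_local(2)[of "{y. R < norm y}"]) (auto intro: open_Collect_less continuous_intros supp)
  qed
  have psiC: "C1on E \<psi>" "C1on E (pdiff j \<psi>)" using Cc_C1[OF psi] by auto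
  have CF: "C1on UNIV F"
  proof -
    have "C1on E F" unfolding F_def by (rule C1on_mult[OF psiC(1) C1on_subset[OF C]]) simp
    moreover have "C1on Ob F"
      by (rule C1on_cong[OF oO C1on_const[of Ob 0]]) (simp add: F_def bz)
    ultimately have "C1on (E \<union> Ob) F" by (rule C1on_glue[OF E_open oO])
    then show ?thesis using U by simp
  qed
  have Fz: "F x = 0" if "R < norm x" for x using supp that by (simp add: F_def)
  have pF: "pdiff j F x = ext0 (\<lambda>x. pdiff j \<psi> x * \<beta> x) x + ext0 (\<lambda>x. \<psi> x * pdiff j \<beta> x) x" for x
  proof (cases "x \<in> E")
    case True
    have "pdiff j F x = pdiff j \<psi> x * \<beta> x + \<psi> x * pdiff j \<beta> x"
      unfolding F_def by (rule pdiff_mult(2)) (use True psiC C in \<open>auto simp: C1on_def\<close>)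
    then show ?thesis using True by (simp add: ext0_def)
  next
    case False
    then have xO: "x \<in> Ob" using U by auto
    have "pdiff j F x = 0" by (rule pdiff_zero_local(2)[OF oO xO]) (simp add: F_def bz)
    then show ?thesis using False by (simp add: ext0_def)
  qed
  have c1: "continuous_on UNIV (ext0 (\<lambda>x. pdiff j \<psi> x * \<beta> x))"
    by (rule ext0_cont[OF _ d]) (use psiC C in \<open>auto simp: C1on_def bz Ob_def intro!: continuous_intros intro: continuous_on_subset\<close>)
  have c2: "continuous_on UNIV (ext0 (\<lambda>x. \<psi> x * pdiff j \<beta> x))"
    by (rule ext0_cont[OF _ d]) (use psiC C dbz in \<open>auto simp: C1on_def Ob_def intro!: continuous_intros intro: continuous_on_subset\<close>)
  have z1: "ext0 (\<lambda>x. pdiff j \<psi> x * \<beta> x) x = 0" if "R < norm x" for x using supp that by (simp add: ext0_def)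
  have z2: "ext0 (\<lambda>x. \<psi> x * pdiff j \<beta> x) x = 0" if "R < norm x" for x using dbz that by (simp add: ext0_def)
  show "integrable ME (\<lambda>x. pdiff j \<psi> x * \<beta> x)" by (rule int_E(1)[OF c1 z1])
  show "integrable ME (\<lambda>x. \<psi> x * pdiff j \<beta> x)" by (rule int_E(1)[OF c2 z2])
  have i1: "integrable lborel (ext0 (\<lambda>x. pdiff j \<psi> x * \<beta> x))" by (rule integrable_cont_supp[OF c1 z1])
  have i2: "integrable lborel (ext0 (\<lambda>x. \<psi> x * pdiff j \<beta> x))" by (rule integrable_cont_supp[OF c2 z2])
  have "0 = integral\<^sup>L lborel (pdiff j F)" using ibp0(2)[OF CF Fz] by simp
  also have "\<dots> = integral\<^sup>L lborel (ext0 (\<lambda>x. pdiff j \<psi> x * \<beta> x)) + integral\<^sup>L lborel (ext0 (\<lambda>x. \<psi> x * pdiff j \<beta> x))"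
    unfolding pF using i1 i2 by simp
  also have "\<dots> = integral\<^sup>L ME (\<lambda>x. pdiff j \<psi> x * \<beta> x) + integral\<^sup>L ME (\<lambda>x. \<psi> x * pdiff j \<beta> x)"
    using int_E(2)[OF c1 z1] int_E(2)[OF c2 z2] by simp
  finally show "integral\<^sup>L ME (\<lambda>x. pdiff j \<psi> x * \<beta> x) = - integral\<^sup>L ME (\<lambda>x. \<psi> x * pdiff j \<beta> x)"
    by (simp add: eq_neg_iff_add_eq_0)
qed


definition sabs :: "real \<Rightarrow> real" where "sabs s = s * \<bar>s\<bar>"

lemma sabs_deriv: "(sabs has_real_derivative 2 * \<bar>s\<bar>) (at s)"
proof (cases "s = 0")
  case True
  have "(\<lambda>y::real. \<bar>y\<bar>) \<midarrow>0\<rightarrow> 0" using tendsto_rabs[OF tendsto_ident_at[of 0 UNIV]] by simp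
  moreover have "\<forall>y. y \<noteq> 0 \<longrightarrow> (sabs y - sabs 0) / (y - 0) = \<bar>y\<bar>" by (simp add: sabs_def)
  ultimately have "(\<lambda>y. (sabs y - sabs 0) / (y - 0)) \<midarrow>0\<rightarrow> 0" using LIM_equal[where a=0 and f="\<lambda>y. (sabs y - sabs 0) / (y - 0)" and g="\<lambda>y. \<bar>y\<bar>" and l=0] by simp
  then show ?thesis using True by (simp add: has_field_derivative_iff)
next
  case False
  show ?thesis
  proof (cases "s > 0")
    case True
    have "((\<lambda>y. y * y) has_real_derivative 2 * s) (at s)" by (auto intro!: derivative_eq_intros)
    then have "((\<lambda>y. y * y) has_real_derivative 2 * \<bar>s\<bar>) (at s)" using True by simp
    then show ?thesis
      by (rule has_field_derivative_transform_within_open[where S="{0<..}"]) (use True in \<open>auto simp: sabs_def\<close>)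
  next
    case False
    then have s: "s < 0" using \<open>s \<noteq> 0\<close> by simp
    have "((\<lambda>y. - (y * y)) has_real_derivative - (2 * s)) (at s)" by (auto intro!: derivative_eq_intros)
    then have "((\<lambda>y. - (y * y)) has_real_derivative 2 * \<bar>s\<bar>) (at s)" using s by simp
    then show ?thesis
      by (rule has_field_derivative_transform_within_open[where S="{..<0}"]) (use s in \<open>auto simp: sabs_def\<close>)
  qed
qed

lemma sabs_cont: "continuous_on S sabs"
  unfolding sabs_def by (intro continuous_intros)

definition gq :: "real \<Rightarrow> real" where "gq s = (sabs (s - 1) + (s - 1)\<^sup>2) / 2"
definition qc :: "real \<Rightarrow> real" where "qc s = gq s / (1 + gq s)"
definition qc' :: "real \<Rightarrow> real" where "qc' s = (\<bar>s - 1\<bar> + (s - 1)) / (1 + gq s)\<^sup>2"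

lemma gq_le1: "s \<le> 1 \<Longrightarrow> gq s = 0"
  by (auto simp: gq_def sabs_def power2_eq_square abs_if algebra_simps)

lemma gq_ge1: "1 \<le> s \<Longrightarrow> gq s = (s - 1)\<^sup>2"
  by (auto simp: gq_def sabs_def power2_eq_square abs_if)

lemma gq_nonneg: "0 \<le> gq s"
  by (cases "s \<ge> 1") (auto simp: gq_ge1 gq_le1)

lemma qc_le1: "s \<le> 1 \<Longrightarrow> qc s = 0" by (simp add: qc_def gq_le1)

lemma qc_bounds: "0 \<le> qc s" "qc s \<le> 1"
  using gq_nonneg[of s] by (auto simp: qc_def)

lemma gq_deriv: "(gq has_real_derivative (\<bar>s - 1\<bar> + (s - 1))) (at s)"
proof -
  have d1: "((\<lambda>s. sabs (s - 1)) has_real_derivative 2 * \<bar>s - 1\<bar> * 1) (at s)"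
    by (rule DERIV_chain2[OF sabs_deriv]) (auto intro!: derivative_eq_intros)
  have d2: "((\<lambda>s. (s - 1)\<^sup>2) has_real_derivative 2 * (s - 1)) (at s)"
    by (auto intro!: derivative_eq_intros)
  have "((\<lambda>s. (sabs (s - 1) + (s - 1)\<^sup>2) / 2) has_real_derivative (2 * \<bar>s - 1\<bar> * 1 + 2 * (s - 1)) / 2) (at s)"
    by (intro DERIV_cdivide DERIV_add d1 d2)
  moreover have e: "(2 * \<bar>s - 1\<bar> * 1 + 2 * (s - 1)) / 2 = \<bar>s - 1\<bar> + (s - 1)" by simp
  ultimately show ?thesis unfolding gq_def[abs_def] by (simp only: e)
qed

lemma gq_cont: "continuous_on S gq"
  unfolding gq_def[abs_def] by (intro continuous_intros continuous_on_compose2[OF sabs_cont]) auto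

lemma qc_deriv: "(qc has_real_derivative qc' s) (at s)"
proof -
  have p: "1 + gq s \<noteq> 0" using gq_nonneg[of s] by simp
  have "((\<lambda>s. gq s / (1 + gq s)) has_real_derivative
      ((\<bar>s - 1\<bar> + (s - 1)) * (1 + gq s) - gq s * (0 + (\<bar>s - 1\<bar> + (s - 1)))) / ((1 + gq s) * (1 + gq s))) (at s)"
    by (intro DERIV_divide DERIV_add DERIV_const gq_deriv p)
  then show ?thesis unfolding qc_def[abs_def] qc'_def by (simp add: algebra_simps power2_eq_square)
qed

lemma gq_nz[simp]: "1 + gq x \<noteq> 0"
  using gq_nonneg[of x] by simp

lemma qc'_cont: "continuous_on S qc'"
  unfolding qc'_def[abs_def] by (auto intro!: continuous_intros gq_cont)

lemma qc_cont: "continuous_on S qc"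
  unfolding qc_def[abs_def] by (auto intro!: continuous_intros gq_cont)

lemma qc_lim: assumes "t > 0" shows "(\<lambda>n. qc (real (Suc n) * t)) \<longlonglongrightarrow> 1"
proof -
  have "(\<lambda>n. 1 / (real (Suc n) * t)) \<longlonglongrightarrow> 0"
    using tendsto_mult[OF LIMSEQ_Suc[OF lim_1_over_n] tendsto_const[of "1/t"]] by simp
  moreover have "eventually (\<lambda>n. norm (1 - qc (real (Suc n) * t)) \<le> 1 / (real (Suc n) * t)) sequentially"
  proof -
    obtain N where N: "2 / t \<le> real N" using reals_Archimedean2 by (meson less_le_not_le)
    show ?thesis unfolding eventually_sequentially
    proof (intro exI allI impI)
      fix n assume "N \<le> n"
      define s where "s = real (Suc n) * t"
      have s2: "2 \<le> s" using N \<open>N \<le> n\<close> assms unfolding s_def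
        by (smt (verit, ccfv_SIG) divide_le_eq of_nat_Suc of_nat_mono mult_right_mono)
      have g: "gq s = (s - 1)\<^sup>2" using s2 by (simp add: gq_ge1)
      have "1 - qc s = 1 / (1 + gq s)" unfolding qc_def using gq_nonneg[of s] by (simp add: field_simps)
      also have "\<dots> \<le> 1 / s"
      proof (rule divide_left_mono)
        have h0: "0 \<le> (s - 1) * (s - 2)" using s2 by (intro mult_nonneg_nonneg) auto
        have h1: "1 + (s - 1)\<^sup>2 - s = (s - 1) * (s - 2)" by (simp add: power2_eq_square algebra_simps)
        show "s \<le> 1 + gq s" unfolding g using h0 h1 by linarith
      qed (use s2 gq_nonneg[of s] in \<open>auto intro!: mult_pos_pos add_pos_nonneg\<close>)
      finally show "norm (1 - qc (real (Suc n) * t)) \<le> 1 / (real (Suc n) * t)"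
        using qc_bounds[of s] unfolding s_def by simp
    qed
  qed
  ultimately have "(\<lambda>n. 1 - qc (real (Suc n) * t)) \<longlonglongrightarrow> 0"
    by (rule Lim_null_comparison[rotated])
  from tendsto_diff[OF tendsto_const[of 1] this] show ?thesis by simp
qed

definition rho :: "real \<Rightarrow> R2 \<Rightarrow> complex" where "rho c x = complex_of_real (qc (c * x $ 2))"

lemma rho_C1: "C1on S (rho c)"
proof -
  have p: "lined (rho c) i x \<and> pdiff i (rho c) x = complex_of_real (qc' (c * x $ 2) * (c * ax i $ 2))" for i x
  proof -
    have "((\<lambda>t. qc (c * (x + t *\<^sub>R ax i) $ 2)) has_real_derivative qc' (c * x $ 2) * (c * ax i $ 2)) (at 0)"
    proof -
      have "((\<lambda>t. c * (x + t *\<^sub>R ax i) $ 2) has_real_derivative c * ax i $ 2) (at 0)"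
        by (auto intro!: derivative_eq_intros)
      from DERIV_chain2[OF qc_deriv this] show ?thesis by simp
    qed
    from has_vector_derivative_of_real[OF this]
    have "((\<lambda>t. rho c (x + t *\<^sub>R ax i)) has_vector_derivative complex_of_real (qc' (c * x $ 2) * (c * ax i $ 2))) (at 0)"
      by (simp add: rho_def)
    then show ?thesis using pdiff_eqI by blast
  qed
  then have pp: "pdiff i (rho c) = (\<lambda>x. complex_of_real (qc' (c * x $ 2) * (c * ax i $ 2)))" for i by auto
  have c1: "continuous_on S (rho c)" unfolding rho_def[abs_def]
    by (intro continuous_intros continuous_on_compose2[OF qc_cont[of UNIV]]) auto
  have c2: "continuous_on S (\<lambda>x. complex_of_real (qc' (c * x $ 2) * (c * ax i $ 2)))" for i
    by (intro continuous_intros continuous_on_compose2[OF qc'_cont[of UNIV]]) auto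
  show ?thesis unfolding C1on_def pp using p c1 c2 by auto
qed


definition Yop :: "cfun \<Rightarrow> cfun \<Rightarrow> cfun \<Rightarrow> cfun \<Rightarrow> cfun" where
  "Yop a1 a2 g \<psi> x = a1 x * pdiff 1 \<psi> x + a2 x * pdiff 2 \<psi> x + g x * \<psi> x"

definition testf :: "cfun \<Rightarrow> real \<Rightarrow> real \<Rightarrow> bool" where
  "testf \<eta> \<delta> R \<longleftrightarrow> C1on UNIV \<eta> \<and> \<delta> > 0 \<and> (\<forall>x. x $ 2 < \<delta> \<or> R < norm x \<longrightarrow> \<eta> x = 0)"

lemma testf_pdiff_zero: assumes "testf \<eta> \<delta> R" "x $ 2 < \<delta> \<or> R < norm x"
  shows "pdiff i \<eta> x = 0"
proof (cases "x $ 2 < \<delta>")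
  case True
  then have xO: "x \<in> {y. y $ 2 < \<delta>}" by simp
  show ?thesis by (rule pdiff_zero_local(2)[OF open_O xO]) (use assms(1) in \<open>auto simp: testf_def\<close>)
next
  case False
  then have "x \<in> {y. R < norm y}" using assms(2) by simp
  show ?thesis by (rule pdiff_zero_local(2)[OF _ \<open>x \<in> {y. R < norm y}\<close>])
    (use assms(1) in \<open>auto simp: testf_def intro: open_Collect_less continuous_intros\<close>)
qed

lemma testf_mult: assumes "C1on UNIV a" "testf \<eta> \<delta> R" shows "testf (\<lambda>y. a y * cnj (\<eta> y)) \<delta> R"
  using assms unfolding testf_def by (auto intro!: C1on_mult C1on_cnj)

lemma intE_supp:
  assumes "continuous_on E f" "\<delta> > 0" "\<And>x. x \<in> E \<Longrightarrow> x $ 2 < \<delta> \<or> R < norm x \<Longrightarrow> f x = 0"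
  shows "integrable ME f" "integral\<^sup>L ME f = integral\<^sup>L lborel (ext0 f)"
proof -
  have c: "continuous_on UNIV (ext0 f)" by (rule ext0_cont[OF assms(1,2)]) (use assms(3) in auto)
  have z: "ext0 f x = 0" if "R < norm x" for x using assms(3) that by (simp add: ext0_def)
  show "integrable ME f" "integral\<^sup>L ME f = integral\<^sup>L lborel (ext0 f)" using int_E[OF c z] by auto
qed

lemma L2_cont_supp:
  assumes "continuous_on E f" "\<delta> > 0" "\<And>x. x \<in> E \<Longrightarrow> x $ 2 < \<delta> \<or> R < norm x \<Longrightarrow> f x = 0"
  shows "L2 f"
  unfolding L2_def
proof
  show "f \<in> borel_measurable ME" by (rule continuous_imp_measurable_on_sets_lebesgue[OF assms(1) E_sets])
  have "integrable ME (\<lambda>x. complex_of_real ((cmod (f x))\<^sup>2))"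
    by (rule intE_supp(1)[OF _ assms(2)]) (use assms in \<open>auto intro!: continuous_intros\<close>)
  then show "integrable ME (\<lambda>x. (cmod (f x))\<^sup>2)" by (simp only: complex_of_real_integrable_eq)
qed

lemma testf_L2: "testf \<eta> \<delta> R \<Longrightarrow> L2 \<eta>"
  by (rule L2_cont_supp[of _ \<delta> R]) (auto simp: testf_def C1on_def intro: continuous_on_subset)

definition Zt :: "cfun \<Rightarrow> cfun \<Rightarrow> cfun \<Rightarrow> cfun \<Rightarrow> cfun" where
  "Zt a1 a2 g \<eta> x = cnj (- pdiff 1 (\<lambda>y. a1 y * cnj (\<eta> y)) x - pdiff 2 (\<lambda>y. a2 y * cnj (\<eta> y)) x + g x * cnj (\<eta> x))"

lemma Zt_L2: assumes "C1on UNIV a1" "C1on UNIV a2" "continuous_on UNIV g" "testf \<eta> \<delta> R"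
  shows "L2 (Zt a1 a2 g \<eta>)"
proof -
  have t1: "testf (\<lambda>y. a1 y * cnj (\<eta> y)) \<delta> R" and t2: "testf (\<lambda>y. a2 y * cnj (\<eta> y)) \<delta> R"
    using testf_mult assms by auto
  have c: "continuous_on UNIV (pdiff i (\<lambda>y. a1 y * cnj (\<eta> y)))" "continuous_on UNIV (pdiff i (\<lambda>y. a2 y * cnj (\<eta> y)))"
    "continuous_on UNIV \<eta>" for i
    using t1 t2 assms(4) by (auto simp: testf_def C1on_def)
  show ?thesis
  proof (rule L2_cont_supp[of _ \<delta> R])
    show "continuous_on E (Zt a1 a2 g \<eta>)" unfolding Zt_def[abs_def]
      using c assms(3) by (intro continuous_intros; auto intro: continuous_on_subset)
    show "0 < \<delta>" using assms(4) by (simp add: testf_def)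
    show "Zt a1 a2 g \<eta> x = 0" if "x \<in> E" "x $ 2 < \<delta> \<or> R < norm x" for x
    proof -
      have "\<eta> x = 0" using assms(4) that(2) by (auto simp: testf_def)
      then show ?thesis using testf_pdiff_zero[OF t1 that(2)] testf_pdiff_zero[OF t2 that(2)]
        by (simp add: Zt_def)
    qed
  qed
qed

lemma weak_id:
  assumes a1: "C1on UNIV a1" and a2: "C1on UNIV a2" and g: "continuous_on UNIV g"
    and T: "testf \<eta> \<delta> R" and psi: "\<psi> \<in> Cc"
  shows "ip (Yop a1 a2 g \<psi>) \<eta> = ip \<psi> (Zt a1 a2 g \<eta>)"
proof -
  define \<beta>1 where "\<beta>1 y = a1 y * cnj (\<eta> y)" for y
  define \<beta>2 where "\<beta>2 y = a2 y * cnj (\<eta> y)" for y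
  have t1: "testf \<beta>1 \<delta> R" unfolding \<beta>1_def[abs_def] by (rule testf_mult[OF a1 T])
  have t2: "testf \<beta>2 \<delta> R" unfolding \<beta>2_def[abs_def] by (rule testf_mult[OF a2 T])
  have d: "\<delta> > 0" using T by (simp add: testf_def)
  have h1: "C1on UNIV \<beta>1" and s1: "\<And>x. x $ 2 < \<delta> \<or> R < norm x \<Longrightarrow> \<beta>1 x = 0"
    using t1 by (auto simp: testf_def)
  have h2: "C1on UNIV \<beta>2" and s2: "\<And>x. x $ 2 < \<delta> \<or> R < norm x \<Longrightarrow> \<beta>2 x = 0"
    using t2 by (auto simp: testf_def)
  have I1: "integrable ME (\<lambda>x. pdiff 1 \<psi> x * \<beta>1 x)" "integrable ME (\<lambda>x. \<psi> x * pdiff 1 \<beta>1 x)"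
    "integral\<^sup>L ME (\<lambda>x. pdiff 1 \<psi> x * \<beta>1 x) = - integral\<^sup>L ME (\<lambda>x. \<psi> x * pdiff 1 \<beta>1 x)"
    using ibp_Cc[OF psi h1 d s1, where j=1] by auto
  have I2: "integrable ME (\<lambda>x. pdiff 2 \<psi> x * \<beta>2 x)" "integrable ME (\<lambda>x. \<psi> x * pdiff 2 \<beta>2 x)"
    "integral\<^sup>L ME (\<lambda>x. pdiff 2 \<psi> x * \<beta>2 x) = - integral\<^sup>L ME (\<lambda>x. \<psi> x * pdiff 2 \<beta>2 x)"
    using ibp_Cc[OF psi h2 d s2, where j=2] by auto
  have cpsi: "continuous_on E \<psi>" using Cc_C1[OF psi] by (simp add: C1on_def)
  have I3: "integrable ME (\<lambda>x. \<psi> x * (g x * cnj (\<eta> x)))"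
    by (rule intE_supp(1)[OF _ d, of _ R]) (use cpsi g T in \<open>auto simp: testf_def C1on_def intro!: continuous_intros intro: continuous_on_subset\<close>)
  have "ip (Yop a1 a2 g \<psi>) \<eta> = integral\<^sup>L ME (\<lambda>x. pdiff 1 \<psi> x * \<beta>1 x + pdiff 2 \<psi> x * \<beta>2 x + \<psi> x * (g x * cnj (\<eta> x)))"
    unfolding ip_def Yop_def \<beta>1_def \<beta>2_def by (simp add: algebra_simps)
  also have "\<dots> = integral\<^sup>L ME (\<lambda>x. pdiff 1 \<psi> x * \<beta>1 x) + integral\<^sup>L ME (\<lambda>x. pdiff 2 \<psi> x * \<beta>2 x) + integral\<^sup>L ME (\<lambda>x. \<psi> x * (g x * cnj (\<eta> x)))"
    using I1 I2 I3 by simp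
  also have "\<dots> = - integral\<^sup>L ME (\<lambda>x. \<psi> x * pdiff 1 \<beta>1 x) - integral\<^sup>L ME (\<lambda>x. \<psi> x * pdiff 2 \<beta>2 x) + integral\<^sup>L ME (\<lambda>x. \<psi> x * (g x * cnj (\<eta> x)))"
    using I1(3) I2(3) by simp
  also have "\<dots> = integral\<^sup>L ME (\<lambda>x. - (\<psi> x * pdiff 1 \<beta>1 x) - \<psi> x * pdiff 2 \<beta>2 x + \<psi> x * (g x * cnj (\<eta> x)))"
    using I1 I2 I3 by simp
  also have "\<dots> = ip \<psi> (Zt a1 a2 g \<eta>)"
    unfolding ip_def Zt_def \<beta>1_def[abs_def] \<beta>2_def[abs_def] by (simp add: algebra_simps)
  finally show ?thesis .
qed

lemma weak_lim:
  assumes a1: "C1on UNIV a1" and a2: "C1on UNIV a2" and g: "continuous_on UNIV g"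
    and T: "testf \<eta> \<delta> R" and psi: "\<And>n. \<psi>s n \<in> Cc"
    and cu: "L2_conv \<psi>s u" and cv: "L2_conv (\<lambda>n. Yop a1 a2 g (\<psi>s n)) v"
  shows "ip v \<eta> = ip u (Zt a1 a2 g \<eta>)"
proof -
  have l1: "(\<lambda>n. ip (Yop a1 a2 g (\<psi>s n)) \<eta>) \<longlonglongrightarrow> ip v \<eta>"
    by (rule ip_conv_left[OF cv testf_L2[OF T]])
  have l2: "(\<lambda>n. ip (\<psi>s n) (Zt a1 a2 g \<eta>)) \<longlonglongrightarrow> ip u (Zt a1 a2 g \<eta>)"
    by (rule ip_conv_left[OF cu Zt_L2[OF a1 a2 g T]])
  have "(\<lambda>n. ip (Yop a1 a2 g (\<psi>s n)) \<eta>) = (\<lambda>n. ip (\<psi>s n) (Zt a1 a2 g \<eta>))"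
    using weak_id[OF a1 a2 g T psi] by auto
  then show ?thesis using l1 l2 LIMSEQ_unique by metis
qed


lemma Yop_C1: assumes "C1on UNIV a1" "C1on UNIV a2" "C1on UNIV g" "\<psi> \<in> Cc"
  shows "C1on E (Yop a1 a2 g \<psi>)"
proof -
  have "C1on E (\<lambda>x. a1 x * pdiff 1 \<psi> x + a2 x * pdiff 2 \<psi> x + g x * \<psi> x)"
    using assms Cc_C1[OF assms(4)]
    by (intro C1on_add C1on_mult; auto intro: C1on_subset)
  then show ?thesis unfolding Yop_def[abs_def] .
qed

lemma rho_zero: assumes "0 < c" "x $ 2 < 1 / c" shows "rho c x = 0"
proof -
  have "c * x $ 2 \<le> 1" using assms by (simp add: field_simps)
  then show ?thesis unfolding rho_def by (simp add: qc_le1)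
qed

lemma rho_bound: "cmod (rho c x) \<le> 1"
  using qc_bounds[of "c * x $ 2"] by (simp add: rho_def)

lemma approx_testf:
  assumes a: "C1on UNIV a1" "C1on UNIV a2" "C1on UNIV g" and psi: "\<psi> \<in> Cc"
  obtains R where "\<And>k. testf (\<lambda>x. rho (real (Suc k)) x * Yop a1 a2 g \<psi> x) (1 / real (Suc k)) R"
proof -
  obtain a where a0: "a > 0" and z: "\<And>x. x \<in> E \<Longrightarrow> (a < \<bar>x $ 1\<bar> \<or> a < x $ 2) \<Longrightarrow> \<psi> x = 0"
    and zd: "\<And>x j. x \<in> E \<Longrightarrow> (a < \<bar>x $ 1\<bar> \<or> a < x $ 2) \<Longrightarrow> pdiff j \<psi> x = 0"
    using Cc_supp_d[OF psi] by blast
  have YC: "C1on E (Yop a1 a2 g \<psi>)" by (rule Yop_C1[OF a psi])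
  have "testf (\<lambda>x. rho (real (Suc k)) x * Yop a1 a2 g \<psi> x) (1 / real (Suc k)) (2 * a)" for k
  proof -
    define c where "c = real (Suc k)"
    have c0: "c > 0" by (simp add: c_def)
    define Ob where "Ob = {x::R2. x $ 2 < 1 / c}"
    have oO: "open Ob" unfolding Ob_def by (rule open_O)
    have U: "E \<union> Ob = UNIV" unfolding Ob_def by (rule EO_UNIV) (simp add: c0)
    have rz: "rho c x = 0" if "x \<in> Ob" for x using rho_zero[OF c0] that by (simp add: Ob_def)
    have C: "C1on UNIV (\<lambda>x. rho c x * Yop a1 a2 g \<psi> x)"
    proof -
      have "C1on E (\<lambda>x. rho c x * Yop a1 a2 g \<psi> x)" by (rule C1on_mult[OF rho_C1 YC])
      moreover have "C1on Ob (\<lambda>x. rho c x * Yop a1 a2 g \<psi> x)"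
        by (rule C1on_cong[OF oO C1on_const[of Ob 0]]) (simp add: rz)
      ultimately have "C1on (E \<union> Ob) (\<lambda>x. rho c x * Yop a1 a2 g \<psi> x)" by (rule C1on_glue[OF E_open oO])
      then show ?thesis using U by simp
    qed
    have s: "rho c x * Yop a1 a2 g \<psi> x = 0" if "x $ 2 < 1 / c \<or> 2 * a < norm x" for x
    proof (cases "x $ 2 < 1 / c")
      case True then show ?thesis using rz by (simp add: Ob_def)
    next
      case False
      then have x2: "x $ 2 \<ge> 1 / c" and n: "2 * a < norm x" using that by auto
      then have xE: "x \<in> E" using c0 by (simp add: E_def) (smt (verit) divide_pos_pos)
      have "norm x \<le> \<bar>x $ 1\<bar> + \<bar>x $ 2\<bar>" using norm_le_l1_cart[of x] by (simp add: sum_2)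
      then have "a < \<bar>x $ 1\<bar> \<or> a < x $ 2" using n xE by (auto simp: E_def)
      then have "Yop a1 a2 g \<psi> x = 0" using z[OF xE] zd[OF xE] by (simp add: Yop_def)
      then show ?thesis by simp
    qed
    show ?thesis unfolding testf_def using C s c0 by (simp add: c_def)
  qed
  then show ?thesis using that by blast
qed

lemma approx_lim:
  assumes "L2 v" "L2 Y"
  shows "(\<lambda>k. ip v (\<lambda>x. rho (real (Suc k)) x * Y x)) \<longlonglongrightarrow> ip v Y"
  unfolding ip_def
proof (rule integral_dominated_convergence[where w="\<lambda>x. cmod (v x) * cmod (Y x)"])
  have mv: "v \<in> borel_measurable ME" and mY: "Y \<in> borel_measurable ME" using assms by (auto simp: L2_def)
  show "(\<lambda>x. v x * cnj (Y x)) \<in> borel_measurable ME" using mv mY by (intro borel_measurable_times meas_cnj)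
  have mr: "rho c \<in> borel_measurable ME" for c
    by (rule continuous_imp_measurable_on_sets_lebesgue[OF _ E_sets]) (use rho_C1[of E c] in \<open>simp add: C1on_def\<close>)
  show "(\<lambda>x. v x * cnj (rho (real (Suc k)) x * Y x)) \<in> borel_measurable ME" for k
    using mv mY mr by (intro borel_measurable_times meas_cnj)
  show "integrable ME (\<lambda>x. cmod (v x) * cmod (Y x))" by (rule absprod_integrable[OF assms])
  show "AE x in ME. (\<lambda>k. v x * cnj (rho (real (Suc k)) x * Y x)) \<longlonglongrightarrow> v x * cnj (Y x)"
  proof (rule AE_I2)
    fix x assume "x \<in> space ME"
    then have "x $ 2 > 0" by (simp add: E_def)
    from qc_lim[OF this] have "(\<lambda>k. rho (real (Suc k)) x) \<longlonglongrightarrow> 1"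
      unfolding rho_def by (metis of_real_1 tendsto_of_real)
    then have "(\<lambda>k. v x * cnj (rho (real (Suc k)) x * Y x)) \<longlonglongrightarrow> v x * cnj (1 * Y x)"
      by (intro tendsto_intros)
    then show "(\<lambda>k. v x * cnj (rho (real (Suc k)) x * Y x)) \<longlonglongrightarrow> v x * cnj (Y x)" by simp
  qed
  show "AE x in ME. norm (v x * cnj (rho (real (Suc k)) x * Y x)) \<le> cmod (v x) * cmod (Y x)" for k
  proof (rule AE_I2)
    fix x
    have "cmod (rho (real (Suc k)) x) * cmod (Y x) \<le> 1 * cmod (Y x)" by (rule mult_right_mono[OF rho_bound]) simp
    then show "norm (v x * cnj (rho (real (Suc k)) x * Y x)) \<le> cmod (v x) * cmod (Y x)"
      by (simp add: norm_mult mult_left_mono)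
  qed
qed

lemma closable:
  assumes a: "C1on UNIV a1" "C1on UNIV a2" "C1on UNIV g"
    and psi: "\<And>n. \<psi>s n \<in> Cc" and cu: "L2_conv \<psi>s u" and cv: "L2_conv (\<lambda>n. Yop a1 a2 g (\<psi>s n)) v"
    and phi: "\<And>n. \<phi>s n \<in> Cc" and cu': "L2_conv \<phi>s u" and cv': "L2_conv (\<lambda>n. Yop a1 a2 g (\<phi>s n)) v'"
  shows "nrm (\<lambda>x. v x - v' x) = 0"
proof -
  have gc: "continuous_on UNIV g" using a(3) by (simp add: C1on_def)
  have Lv: "L2 v" "L2 v'" using cv cv' by (auto simp: L2_conv_def)
  have eqT: "ip v \<eta> = ip v' \<eta>" if "testf \<eta> \<delta> R" for \<eta> \<delta> R
    using weak_lim[OF a(1,2) gc that psi cu cv] weak_lim[OF a(1,2) gc that phi cu' cv'] by simp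
  have eqY: "ip v (Yop a1 a2 g \<theta>) = ip v' (Yop a1 a2 g \<theta>)" if th: "\<theta> \<in> Cc" "L2 (Yop a1 a2 g \<theta>)" for \<theta>
  proof -
    obtain R where R: "\<And>k. testf (\<lambda>x. rho (real (Suc k)) x * Yop a1 a2 g \<theta> x) (1 / real (Suc k)) R"
      using approx_testf[OF a th(1)] by blast
    have l1: "(\<lambda>k. ip v (\<lambda>x. rho (real (Suc k)) x * Yop a1 a2 g \<theta> x)) \<longlonglongrightarrow> ip v (Yop a1 a2 g \<theta>)"
      by (rule approx_lim[OF Lv(1) th(2)])
    have l2: "(\<lambda>k. ip v' (\<lambda>x. rho (real (Suc k)) x * Yop a1 a2 g \<theta> x)) \<longlonglongrightarrow> ip v' (Yop a1 a2 g \<theta>)"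
      by (rule approx_lim[OF Lv(2) th(2)])
    have eq: "(\<lambda>k. ip v' (\<lambda>x. rho (real (Suc k)) x * Yop a1 a2 g \<theta> x)) = (\<lambda>k. ip v (\<lambda>x. rho (real (Suc k)) x * Yop a1 a2 g \<theta> x))"
      by (rule ext) (rule eqT[OF R, symmetric])
    have l2': "(\<lambda>k. ip v (\<lambda>x. rho (real (Suc k)) x * Yop a1 a2 g \<theta> x)) \<longlonglongrightarrow> ip v' (Yop a1 a2 g \<theta>)"
      using l2 unfolding eq .
    show ?thesis by (rule LIMSEQ_unique[OF l1 l2'])
  qed
  have e1: "ip v v = ip v' v"
  proof -
    have "(\<lambda>n. ip v (Yop a1 a2 g (\<psi>s n))) \<longlonglongrightarrow> ip v v" by (rule ip_conv_right[OF cv Lv(1)])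
    moreover have "(\<lambda>n. ip v' (Yop a1 a2 g (\<psi>s n))) \<longlonglongrightarrow> ip v' v" by (rule ip_conv_right[OF cv Lv(2)])
    moreover have "(\<lambda>n. ip v' (Yop a1 a2 g (\<psi>s n))) = (\<lambda>n. ip v (Yop a1 a2 g (\<psi>s n)))"
      by (rule ext) (rule eqY[OF psi L2_conv_L2(2)[OF cv], symmetric])
    ultimately have "(\<lambda>n. ip v (Yop a1 a2 g (\<psi>s n))) \<longlonglongrightarrow> ip v' v" by (simp only:)
    then show ?thesis using LIMSEQ_unique \<open>(\<lambda>n. ip v (Yop a1 a2 g (\<psi>s n))) \<longlonglongrightarrow> ip v v\<close> by blast
  qed
  have e2: "ip v v' = ip v' v'"
  proof -
    have "(\<lambda>n. ip v (Yop a1 a2 g (\<phi>s n))) \<longlonglongrightarrow> ip v v'" by (rule ip_conv_right[OF cv' Lv(1)])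
    moreover have "(\<lambda>n. ip v' (Yop a1 a2 g (\<phi>s n))) \<longlonglongrightarrow> ip v' v'" by (rule ip_conv_right[OF cv' Lv(2)])
    moreover have "(\<lambda>n. ip v' (Yop a1 a2 g (\<phi>s n))) = (\<lambda>n. ip v (Yop a1 a2 g (\<phi>s n)))"
      by (rule ext) (rule eqY[OF phi L2_conv_L2(2)[OF cv'], symmetric])
    ultimately have "(\<lambda>n. ip v (Yop a1 a2 g (\<phi>s n))) \<longlonglongrightarrow> ip v' v'" by (simp only:)
    then show ?thesis using LIMSEQ_unique \<open>(\<lambda>n. ip v (Yop a1 a2 g (\<phi>s n))) \<longlonglongrightarrow> ip v v'\<close> by blast
  qed
  have Ld: "L2 (\<lambda>x. v x - v' x)" by (rule L2_diff[OF Lv])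
  have "ip (\<lambda>x. v x - v' x) (\<lambda>x. v x - v' x) = (ip v v - ip v' v) - (ip v v' - ip v' v')"
    using Lv Ld by (simp add: ip_diff_left ip_diff_right)
  also have "\<dots> = 0" using e1 e2 by simp
  finally show ?thesis by (simp add: nrm_zero_ip)
qed


lemma h_graph_form:
  assumes "h_graph b u f"
  obtains g1 g2 where "form_dom b u g1 g2" "complex_of_real ((nrm g1)\<^sup>2 + (nrm g2)\<^sup>2) = ip f u"
    "L2 f" "L2 u" "L2 g1" "L2 g2"
proof -
  obtain g1 g2 where L: "L2 f" and fd: "form_dom b u g1 g2"
    and all: "\<forall>v k1 k2. form_dom b v k1 k2 \<longrightarrow> ip g1 k1 + ip g2 k2 = ip f v"
    using assms unfolding h_graph_def by blast
  have "ip g1 g1 + ip g2 g2 = ip f u" using all fd by blast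
  then have "complex_of_real ((nrm g1)\<^sup>2 + (nrm g2)\<^sup>2) = ip f u" by (simp add: ip_self)
  moreover have "L2 u" "L2 g1" "L2 g2" using fd unfolding form_dom_def L2_conv_def by auto
  ultimately show ?thesis using that fd L by blast
qed

lemma est_lam:
  assumes Lf: "L2 f" and Lu: "L2 u" and G: "complex_of_real G = ip f u" and lam: "lam > 0"
  shows "(nrm (\<lambda>x. f x + complex_of_real lam * u x))\<^sup>2 = (nrm f)\<^sup>2 + 2 * lam * G + lam\<^sup>2 * (nrm u)\<^sup>2"
proof -
  have Lu': "L2 (\<lambda>x. complex_of_real lam * u x)" by (rule L2_cmult[OF Lu])
  have "ip (\<lambda>x. f x + complex_of_real lam * u x) (\<lambda>x. f x + complex_of_real lam * u x)
     = ip f f + ip f (\<lambda>x. complex_of_real lam * u x) + (ip (\<lambda>x. complex_of_real lam * u x) f + ip (\<lambda>x. complex_of_real lam * u x) (\<lambda>x. complex_of_real lam * u x))"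
    using Lf Lu' by (simp add: ip_add_left ip_add_right L2_add)
  also have "\<dots> = ip f f + complex_of_real lam * ip f u + complex_of_real lam * cnj (ip f u) + complex_of_real (lam\<^sup>2) * ip u u"
    by (simp add: ip_cmult_left ip_cmult_right ip_sym[of u f] power2_eq_square)
  finally have "Re (ip (\<lambda>x. f x + complex_of_real lam * u x) (\<lambda>x. f x + complex_of_real lam * u x))
     = Re (ip f f) + lam * G + lam * G + lam\<^sup>2 * Re (ip u u)"
    using G[symmetric] by simp
  then show ?thesis by (simp add: nrm_sq_ip)
qed

lemma est_G: assumes "L2 f" "L2 u" "complex_of_real G = ip f u" shows "G \<le> nrm f * nrm u"
proof -
  have "G = Re (ip f u)" using assms(3)[symmetric] by simp
  also have "\<dots> \<le> cmod (ip f u)" by (rule complex_Re_le_cmod)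
  also have "\<dots> \<le> nrm f * nrm u" by (rule CS[OF assms(1,2)])
  finally show ?thesis .
qed

lemma nrm_triangle3: assumes "L2 f" "L2 g" "L2 h" shows "nrm (\<lambda>x. f x + g x + h x) \<le> nrm f + nrm g + nrm h"
proof -
  have "nrm (\<lambda>x. f x + g x + h x) \<le> nrm (\<lambda>x. f x + g x) + nrm h"
    using nrm_triangle[OF L2_add[OF assms(1,2)] assms(3)] by simp
  also have "\<dots> \<le> nrm f + nrm g + nrm h" using nrm_triangle[OF assms(1,2)] by simp
  finally show ?thesis .
qed

lemma finish:
  fixes Y :: "cfun \<Rightarrow> cfun" and Vf :: "cfun \<Rightarrow> cfun \<Rightarrow> cfun \<Rightarrow> cfun"
  assumes a: "C1on UNIV a1" "C1on UNIV a2" "C1on UNIV g" and Y: "Y = Yop a1 a2 g"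
    and conv: "\<And>\<phi> u g1 g2. (\<And>n. \<phi> n \<in> Cc) \<Longrightarrow> L2_conv \<phi> u \<Longrightarrow> L2_conv (\<lambda>n. P01 b (\<phi> n)) g1
        \<Longrightarrow> L2_conv (\<lambda>n. P02 b (\<phi> n)) g2 \<Longrightarrow> L2_conv (\<lambda>n. Y (\<phi> n)) (Vf u g1 g2)"
    and bnd: "\<And>u g1 g2. L2 u \<Longrightarrow> L2 g1 \<Longrightarrow> L2 g2 \<Longrightarrow> nrm (Vf u g1 g2) \<le> K * (nrm g1 + nrm g2 + nrm u)"
    and K: "K > 0"
  shows "(\<forall>u f. h_graph b u f \<longrightarrow> (\<exists>v. clos_graph Y u v))
    \<and> (\<exists>C. \<forall>lam>0. \<forall>u f v. h_graph b u f \<longrightarrow> clos_graph Y u v \<longrightarrow>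
           nrm v \<le> C * sqrt (1 + lam) / lam * nrm (\<lambda>x. f x + complex_of_real lam * u x))
    \<and> (\<forall>\<epsilon>>0. \<exists>C\<^sub>\<epsilon>. \<forall>u f v. h_graph b u f \<longrightarrow> clos_graph Y u v \<longrightarrow>
           nrm v \<le> \<epsilon> * nrm f + C\<^sub>\<epsilon> * nrm u)"
proof -
  have key: "\<exists>g1 g2. L2 f \<and> L2 u \<and> L2 g1 \<and> L2 g2 \<and> complex_of_real ((nrm g1)\<^sup>2 + (nrm g2)\<^sup>2) = ip f u \<and>
      clos_graph Y u (Vf u g1 g2) \<and> (\<forall>v. clos_graph Y u v \<longrightarrow> nrm v \<le> K * (nrm g1 + nrm g2 + nrm u))"
    if h: "h_graph b u f" for u f
  proof -
    obtain g1 g2 where fd: "form_dom b u g1 g2" and G: "complex_of_real ((nrm g1)\<^sup>2 + (nrm g2)\<^sup>2) = ip f u"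
      and L: "L2 f" "L2 u" "L2 g1" "L2 g2" using h_graph_form[OF h] by blast
    obtain \<phi> where phi: "\<And>n. \<phi> n \<in> Cc" and c0: "L2_conv \<phi> u" and c1: "L2_conv (\<lambda>n. P01 b (\<phi> n)) g1"
      and c2: "L2_conv (\<lambda>n. P02 b (\<phi> n)) g2" using fd unfolding form_dom_def by blast
    have cY: "L2_conv (\<lambda>n. Y (\<phi> n)) (Vf u g1 g2)" by (rule conv[OF phi c0 c1 c2])
    have cg: "clos_graph Y u (Vf u g1 g2)" unfolding clos_graph_def using phi c0 cY by blast
    have "nrm v \<le> K * (nrm g1 + nrm g2 + nrm u)" if cv: "clos_graph Y u v" for v
    proof -
      obtain \<psi> where psi: "\<And>n. \<psi> n \<in> Cc" and d0: "L2_conv \<psi> u" and dY: "L2_conv (\<lambda>n. Y (\<psi> n)) v"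
        using cv unfolding clos_graph_def by blast
      have z: "nrm (\<lambda>x. v x - Vf u g1 g2 x) = 0"
        by (rule closable[OF a psi d0 dY[unfolded Y] phi c0 cY[unfolded Y]])
      have Lv: "L2 v" "L2 (Vf u g1 g2)" using dY cY by (auto simp: L2_conv_def)
      have "nrm v = nrm (\<lambda>x. Vf u g1 g2 x + (v x - Vf u g1 g2 x))" by simp
      also have "\<dots> \<le> nrm (Vf u g1 g2) + nrm (\<lambda>x. v x - Vf u g1 g2 x)"
        by (rule nrm_triangle[OF Lv(2) L2_diff[OF Lv]])
      also have "\<dots> \<le> K * (nrm g1 + nrm g2 + nrm u)" using z bnd[OF L(2,3,4)] by simp
      finally show ?thesis .
    qed
    then show ?thesis using L G cg by blast
  qed
  show ?thesis
  proof (intro conjI)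
    show "\<forall>u f. h_graph b u f \<longrightarrow> (\<exists>v. clos_graph Y u v)" using key by blast
    show "\<exists>C. \<forall>lam>0. \<forall>u f v. h_graph b u f \<longrightarrow> clos_graph Y u v \<longrightarrow>
           nrm v \<le> C * sqrt (1 + lam) / lam * nrm (\<lambda>x. f x + complex_of_real lam * u x)"
    proof (intro exI[of _ "3 * K"] allI impI)
      fix lam :: real and u f v assume lam: "lam > 0" and h: "h_graph b u f" and cv: "clos_graph Y u v"
      obtain g1 g2 where L: "L2 f" "L2 u" "L2 g1" "L2 g2" and G: "complex_of_real ((nrm g1)\<^sup>2 + (nrm g2)\<^sup>2) = ip f u"
        and B: "nrm v \<le> K * (nrm g1 + nrm g2 + nrm u)" using key[OF h] cv by blast
      define q where "q = nrm (\<lambda>x. f x + complex_of_real lam * u x)"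
      have q0: "0 \<le> q" by (simp add: q_def nrm_nonneg)
      have qq: "q\<^sup>2 = (nrm f)\<^sup>2 + 2 * lam * ((nrm g1)\<^sup>2 + (nrm g2)\<^sup>2) + lam\<^sup>2 * (nrm u)\<^sup>2"
        unfolding q_def by (rule est_lam[OF L(1,2) G lam])
      define s where "s = sqrt (1 + lam) / lam"
      have "(lam * nrm u)\<^sup>2 \<le> q\<^sup>2" using qq lam by (simp add: power_mult_distrib)
      then have "lam * nrm u \<le> q" using q0 by (rule power2_le_imp_le)
      then have au: "nrm u \<le> q / lam" using lam by (simp add: field_simps)
      have gj: "nrm gj \<le> q / sqrt lam" if "gj = g1 \<or> gj = g2" for gj
      proof -
        have A: "lam * (nrm gj)\<^sup>2 \<le> lam * ((nrm g1)\<^sup>2 + (nrm g2)\<^sup>2)" using that lam by (auto intro: mult_left_mono)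
        have B: "0 \<le> lam * ((nrm g1)\<^sup>2 + (nrm g2)\<^sup>2)" using lam by simp
        have C: "0 \<le> lam\<^sup>2 * (nrm u)\<^sup>2" "0 \<le> (nrm f)\<^sup>2" by simp_all
        have "lam * (nrm gj)\<^sup>2 \<le> q\<^sup>2" using qq A B C by linarith
        then have "(sqrt lam * nrm gj)\<^sup>2 \<le> q\<^sup>2" using lam by (simp add: power_mult_distrib)
        then have "sqrt lam * nrm gj \<le> q" using q0 by (rule power2_le_imp_le)
        then show ?thesis using lam by (simp add: field_simps)
      qed
      have s1: "1 / sqrt lam \<le> s"
      proof -
        have "1 / sqrt lam = sqrt lam / lam" using lam by (simp add: field_simps)
        also have "\<dots> \<le> s" unfolding s_def using lam by (intro divide_right_mono) auto
        finally show ?thesis .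
      qed
      have s2: "1 / lam \<le> s" unfolding s_def using lam by (intro divide_right_mono) auto
      have "nrm g1 + nrm g2 + nrm u \<le> q / sqrt lam + q / sqrt lam + q / lam"
        using gj[of g1] gj[of g2] au by simp
      then have "K * (nrm g1 + nrm g2 + nrm u) \<le> K * (q / sqrt lam + q / sqrt lam + q / lam)"
        using K by (intro mult_left_mono) auto
      then have "nrm v \<le> K * (q / sqrt lam + q / sqrt lam + q / lam)" using B by linarith
      also have "\<dots> = K * q * (1 / sqrt lam + 1 / sqrt lam + 1 / lam)" by (simp add: algebra_simps)
      also have "\<dots> \<le> K * q * (3 * s)" using s1 s2 K q0 by (intro mult_left_mono) auto
      finally show "nrm v \<le> 3 * K * sqrt (1 + lam) / lam * q" by (simp add: s_def algebra_simps)
    qed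
    show "\<forall>\<epsilon>>0. \<exists>C\<^sub>\<epsilon>. \<forall>u f v. h_graph b u f \<longrightarrow> clos_graph Y u v \<longrightarrow>
           nrm v \<le> \<epsilon> * nrm f + C\<^sub>\<epsilon> * nrm u"
    proof (intro allI impI)
      fix \<epsilon> :: real assume e: "\<epsilon> > 0"
      define t where "t = \<epsilon> / K"
      have t: "t > 0" using e K by (simp add: t_def)
      show "\<exists>C. \<forall>u f v. h_graph b u f \<longrightarrow> clos_graph Y u v \<longrightarrow> nrm v \<le> \<epsilon> * nrm f + C * nrm u"
      proof (intro exI[of _ "K * (1 / t + 1)"] allI impI)
        fix u f v assume h: "h_graph b u f" and cv: "clos_graph Y u v"
        obtain g1 g2 where L: "L2 f" "L2 u" "L2 g1" "L2 g2" and G: "complex_of_real ((nrm g1)\<^sup>2 + (nrm g2)\<^sup>2) = ip f u"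
          and B: "nrm v \<le> K * (nrm g1 + nrm g2 + nrm u)" using key[OF h] cv by blast
        have Gb: "(nrm g1)\<^sup>2 + (nrm g2)\<^sup>2 \<le> nrm f * nrm u" by (rule est_G[OF L(1,2) G])
        have am: "nrm f * nrm u \<le> ((t * nrm f + nrm u / t) / 2)\<^sup>2"
        proof -
          have "0 \<le> (t * nrm f - nrm u / t)\<^sup>2" by simp
          moreover have "((t * nrm f + nrm u / t) / 2)\<^sup>2 - nrm f * nrm u = (t * nrm f - nrm u / t)\<^sup>2 / 4"
            using t by (simp add: power2_eq_square field_simps)
          ultimately show ?thesis by linarith
        qed
        have hp: "0 \<le> (t * nrm f + nrm u / t) / 2" using t nrm_nonneg[of f] nrm_nonneg[of u] by simp
        have gj: "nrm gj \<le> (t * nrm f + nrm u / t) / 2" if "gj = g1 \<or> gj = g2" for gj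
        proof -
          have "(nrm gj)\<^sup>2 \<le> (nrm g1)\<^sup>2 + (nrm g2)\<^sup>2" using that by auto
          then have "(nrm gj)\<^sup>2 \<le> ((t * nrm f + nrm u / t) / 2)\<^sup>2" using Gb am by linarith
          then show ?thesis using hp by (rule power2_le_imp_le)
        qed
        have "nrm g1 + nrm g2 + nrm u \<le> t * nrm f + nrm u / t + nrm u"
          using gj[of g1] gj[of g2] by simp
        then have "K * (nrm g1 + nrm g2 + nrm u) \<le> K * (t * nrm f + nrm u / t + nrm u)"
          using K by (intro mult_left_mono) auto
        then have "nrm v \<le> K * (t * nrm f + nrm u / t + nrm u)" using B by linarith
        also have "\<dots> = \<epsilon> * nrm f + K * (1 / t + 1) * nrm u" using K by (simp add: t_def algebra_simps)
        finally show "nrm v \<le> \<epsilon> * nrm f + K * (1 / t + 1) * nrm u" .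
      qed
    qed
  qed
qed


lemma BC_bound: fixes g :: "R2 \<Rightarrow> real" assumes "BC_inf g"
  obtains M where "M \<ge> 0" "\<And>y. \<bar>iter_pd ks g y\<bar> \<le> M"
proof -
  have "bounded (range (iter_pd ks g))" using assms by (simp add: BC_inf_def)
  then obtain M where "\<forall>y\<in>range (iter_pd ks g). norm y \<le> M" unfolding bounded_iff by blast
  then have M: "\<And>y. \<bar>iter_pd ks g y\<bar> \<le> M" by auto
  moreover have "M \<ge> 0" using M[of 0] by linarith
  ultimately show ?thesis using that by blast
qed

lemma meas_cont: "continuous_on UNIV (c :: cfun) \<Longrightarrow> c \<in> borel_measurable ME"
  by (rule continuous_imp_measurable_on_sets_lebesgue[OF _ E_sets]) (rule continuous_on_subset, auto)

lemma comb_conv: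
  assumes cu: "L2_conv \<phi> u" and c1: "L2_conv \<psi>1 g1" and c2: "L2_conv \<psi>2 g2"
    and m: "c0 \<in> borel_measurable ME" "d1 \<in> borel_measurable ME" "d2 \<in> borel_measurable ME"
    and b: "\<And>x. cmod (c0 x) \<le> M0" "\<And>x. cmod (d1 x) \<le> M1" "\<And>x. cmod (d2 x) \<le> M2"
  shows "L2_conv (\<lambda>n x. d1 x * \<psi>1 n x + d2 x * \<psi>2 n x + c0 x * \<phi> n x) (\<lambda>x. d1 x * g1 x + d2 x * g2 x + c0 x * u x)"
proof -
  have L: "\<And>n. L2 (\<phi> n)" "\<And>n. L2 (\<psi>1 n)" "\<And>n. L2 (\<psi>2 n)" "L2 u" "L2 g1" "L2 g2"
    using cu c1 c2 by (auto simp: L2_conv_def)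
  have L2c: "L2 (\<lambda>x. d1 x * f1 x + d2 x * f2 x + c0 x * f0 x)" if "L2 f0" "L2 f1" "L2 f2" for f0 f1 f2
    using that m b by (intro L2_add L2_mult) auto
  have lim: "(\<lambda>n. nrm (\<lambda>x. (d1 x * \<psi>1 n x + d2 x * \<psi>2 n x + c0 x * \<phi> n x) - (d1 x * g1 x + d2 x * g2 x + c0 x * u x))) \<longlonglongrightarrow> 0"
  proof (rule Lim_null_comparison)
    let ?B = "\<lambda>n. M1 * nrm (\<lambda>x. \<psi>1 n x - g1 x) + M2 * nrm (\<lambda>x. \<psi>2 n x - g2 x) + M0 * nrm (\<lambda>x. \<phi> n x - u x)"
    show "\<forall>\<^sub>F n in sequentially. norm (nrm (\<lambda>x. (d1 x * \<psi>1 n x + d2 x * \<psi>2 n x + c0 x * \<phi> n x) - (d1 x * g1 x + d2 x * g2 x + c0 x * u x))) \<le> ?B n"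
    proof (intro always_eventually allI)
      fix n
      have e: "(\<lambda>x. (d1 x * \<psi>1 n x + d2 x * \<psi>2 n x + c0 x * \<phi> n x) - (d1 x * g1 x + d2 x * g2 x + c0 x * u x))
          = (\<lambda>x. d1 x * (\<psi>1 n x - g1 x) + d2 x * (\<psi>2 n x - g2 x) + c0 x * (\<phi> n x - u x))"
        by (simp add: fun_eq_iff algebra_simps)
      have D: "L2 (\<lambda>x. \<psi>1 n x - g1 x)" "L2 (\<lambda>x. \<psi>2 n x - g2 x)" "L2 (\<lambda>x. \<phi> n x - u x)"
        using L by (auto intro: L2_diff)
      have "nrm (\<lambda>x. d1 x * (\<psi>1 n x - g1 x) + d2 x * (\<psi>2 n x - g2 x) + c0 x * (\<phi> n x - u x))
          \<le> nrm (\<lambda>x. d1 x * (\<psi>1 n x - g1 x)) + nrm (\<lambda>x. d2 x * (\<psi>2 n x - g2 x)) + nrm (\<lambda>x. c0 x * (\<phi> n x - u x))"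
        by (rule nrm_triangle3) (rule L2_mult[OF D(1) m(2) b(2)], rule L2_mult[OF D(2) m(3) b(3)], rule L2_mult[OF D(3) m(1) b(1)])
      also have "\<dots> \<le> ?B n"
        using nrm_mult_bound[OF D(1) m(2) b(2)] nrm_mult_bound[OF D(2) m(3) b(3)] nrm_mult_bound[OF D(3) m(1) b(1)]
        by simp
      finally show "norm (nrm (\<lambda>x. (d1 x * \<psi>1 n x + d2 x * \<psi>2 n x + c0 x * \<phi> n x) - (d1 x * g1 x + d2 x * g2 x + c0 x * u x))) \<le> ?B n"
        unfolding e by (simp add: nrm_nonneg)
    qed
    show "?B \<longlonglongrightarrow> 0"
      using cu c1 c2 unfolding L2_conv_def by (auto intro!: tendsto_eq_intros)
  qed
  show ?thesis unfolding L2_conv_def using L L2c lim by auto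
qed

lemma comb_bound:
  assumes L: "L2 u" "L2 g1" "L2 g2"
    and m: "c0 \<in> borel_measurable ME" "d1 \<in> borel_measurable ME" "d2 \<in> borel_measurable ME"
    and b: "\<And>x. cmod (c0 x) \<le> M0" "\<And>x. cmod (d1 x) \<le> M1" "\<And>x. cmod (d2 x) \<le> M2"
  shows "nrm (\<lambda>x. d1 x * g1 x + d2 x * g2 x + c0 x * u x) \<le> (M0 + M1 + M2 + 1) * (nrm g1 + nrm g2 + nrm u)"
proof -
  have M: "0 \<le> M0" "0 \<le> M1" "0 \<le> M2" using b by (meson norm_ge_zero order_trans)+
  have "nrm (\<lambda>x. d1 x * g1 x + d2 x * g2 x + c0 x * u x) \<le> nrm (\<lambda>x. d1 x * g1 x) + nrm (\<lambda>x. d2 x * g2 x) + nrm (\<lambda>x. c0 x * u x)"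
    by (rule nrm_triangle3) (rule L2_mult[OF L(2) m(2) b(2)], rule L2_mult[OF L(3) m(3) b(3)], rule L2_mult[OF L(1) m(1) b(1)])
  also have "\<dots> \<le> M1 * nrm g1 + M2 * nrm g2 + M0 * nrm u"
    using nrm_mult_bound[OF L(2) m(2) b(2)] nrm_mult_bound[OF L(3) m(3) b(3)] nrm_mult_bound[OF L(1) m(1) b(1)] by simp
  also have "\<dots> \<le> (M0 + M1 + M2 + 1) * (nrm g1 + nrm g2 + nrm u)"
    using M nrm_nonneg[of g1] nrm_nonneg[of g2] nrm_nonneg[of u]
    by (simp add: algebra_simps add_mono mult_left_mono mult_nonneg_nonneg add_nonneg_nonneg)
  finally show ?thesis .
qed


definition bc :: "cfun \<Rightarrow> bool" where "bc f \<longleftrightarrow> continuous_on UNIV f \<and> (\<exists>M. \<forall>x. cmod (f x) \<le> M)"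

lemma bc_const: "bc (\<lambda>x. c)" unfolding bc_def by auto

lemma bc_add: assumes "bc f" "bc g" shows "bc (\<lambda>x. f x + g x)"
proof -
  obtain M1 M2 where "\<forall>x. cmod (f x) \<le> M1" "\<forall>x. cmod (g x) \<le> M2" using assms by (auto simp: bc_def)
  then have "\<forall>x. cmod (f x + g x) \<le> M1 + M2" by (meson add_mono norm_triangle_ineq order_trans)
  then show ?thesis using assms unfolding bc_def by (auto intro: continuous_intros)
qed

lemma bc_mult: assumes "bc f" "bc g" shows "bc (\<lambda>x. f x * g x)"
proof -
  obtain M1 M2 where M: "\<forall>x. cmod (f x) \<le> M1" "\<forall>x. cmod (g x) \<le> M2" using assms by (auto simp: bc_def)
  then have "\<forall>x. cmod (f x * g x) \<le> M1 * M2" by (auto simp: norm_mult intro!: mult_mono order_trans[OF norm_ge_zero])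
  then show ?thesis using assms unfolding bc_def by (auto intro: continuous_intros)
qed

lemma bc_uminus: assumes "bc f" shows "bc (\<lambda>x. - f x)"
  using assms unfolding bc_def by (auto intro: continuous_intros)

lemma bc_diff: assumes "bc f" "bc g" shows "bc (\<lambda>x. f x - g x)"
  using bc_add[OF assms(1) bc_uminus[OF assms(2)]] by simp

lemma bcD: assumes "bc f" obtains M where "\<And>x. cmod (f x) \<le> M" "f \<in> borel_measurable ME"
  using assms meas_cont unfolding bc_def by blast

lemma finish2:
  fixes Y :: "cfun \<Rightarrow> cfun"
  assumes a: "C1on UNIV a1" "C1on UNIV a2" "C1on UNIV g" and Y: "Y = Yop a1 a2 g"
    and id: "\<And>\<psi>. Y \<psi> = (\<lambda>x. d1 x * P01 b \<psi> x + d2 x * P02 b \<psi> x + c0 x * \<psi> x)"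
    and bcs: "bc c0" "bc d1" "bc d2"
  shows "(\<forall>u f. h_graph b u f \<longrightarrow> (\<exists>v. clos_graph Y u v))
    \<and> (\<exists>C. \<forall>lam>0. \<forall>u f v. h_graph b u f \<longrightarrow> clos_graph Y u v \<longrightarrow>
           nrm v \<le> C * sqrt (1 + lam) / lam * nrm (\<lambda>x. f x + complex_of_real lam * u x))
    \<and> (\<forall>\<epsilon>>0. \<exists>C\<^sub>\<epsilon>. \<forall>u f v. h_graph b u f \<longrightarrow> clos_graph Y u v \<longrightarrow>
           nrm v \<le> \<epsilon> * nrm f + C\<^sub>\<epsilon> * nrm u)"
proof -
  obtain M0 where M0: "\<And>x. cmod (c0 x) \<le> M0" and m0: "c0 \<in> borel_measurable ME" using bcD[OF bcs(1)] by blast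
  obtain M1 where M1: "\<And>x. cmod (d1 x) \<le> M1" and m1: "d1 \<in> borel_measurable ME" using bcD[OF bcs(2)] by blast
  obtain M2 where M2: "\<And>x. cmod (d2 x) \<le> M2" and m2: "d2 \<in> borel_measurable ME" using bcD[OF bcs(3)] by blast
  have Mp: "0 \<le> M0" "0 \<le> M1" "0 \<le> M2" using M0[of 0] M1[of 0] M2[of 0] by (meson norm_ge_zero order_trans)+
  show ?thesis
  proof (rule finish[OF a Y, where Vf="\<lambda>u g1 g2 x. d1 x * g1 x + d2 x * g2 x + c0 x * u x" and K="M0 + M1 + M2 + 1"])
    fix \<phi> u g1 g2
    assume "\<And>n. \<phi> n \<in> Cc" "L2_conv \<phi> u" "L2_conv (\<lambda>n. P01 b (\<phi> n)) g1" "L2_conv (\<lambda>n. P02 b (\<phi> n)) g2"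
    then show "L2_conv (\<lambda>n. Y (\<phi> n)) (\<lambda>x. d1 x * g1 x + d2 x * g2 x + c0 x * u x)"
      unfolding id using comb_conv[OF _ _ _ m0 m1 m2 M0 M1 M2] by blast
  next
    fix u g1 g2 :: cfun assume "L2 u" "L2 g1" "L2 g2"
    then show "nrm (\<lambda>x. d1 x * g1 x + d2 x * g2 x + c0 x * u x) \<le> (M0 + M1 + M2 + 1) * (nrm g1 + nrm g2 + nrm u)"
      by (rule comb_bound[OF _ _ _ m0 m1 m2 M0 M1 M2])
  next
    show "0 < M0 + M1 + M2 + 1" using Mp by simp
  qed
qed

lemma coefA:
  assumes "BC_inf Av"
  shows "C1on UNIV (\<lambda>y. complex_of_real (Av y $ j))" "bc (\<lambda>y. complex_of_real (Av y $ j))"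
    "C1on UNIV (\<lambda>y. complex_of_real (pdiff j (\<lambda>y. Av y $ j) y))" "bc (\<lambda>y. complex_of_real (pdiff j (\<lambda>y. Av y $ j) y))"
proof -
  have B: "BC_inf (\<lambda>y. Av y $ j)" by (rule bounded_comp[OF assms])
  have s: "smooth_on UNIV (\<lambda>y. Av y $ j)" using B by (simp add: BC_inf_def)
  show "C1on UNIV (\<lambda>y. complex_of_real (Av y $ j))" by (rule C1_real0[OF s])
  show "C1on UNIV (\<lambda>y. complex_of_real (pdiff j (\<lambda>y. Av y $ j) y))" by (rule C1_real1[OF s])
  obtain M where "\<And>y. \<bar>iter_pd [] (\<lambda>y. Av y $ j) y\<bar> \<le> M" using BC_bound[OF B] by blast
  then show "bc (\<lambda>y. complex_of_real (Av y $ j))"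
    unfolding bc_def using C1onD(1)[OF C1_real0[OF s]] by auto
  obtain M' where "\<And>y. \<bar>iter_pd [j] (\<lambda>y. Av y $ j) y\<bar> \<le> M'" using BC_bound[OF B] by blast
  then show "bc (\<lambda>y. complex_of_real (pdiff j (\<lambda>y. Av y $ j) y))"
    unfolding bc_def using C1onD(1)[OF C1_real1[OF s]] by auto
qed

lemma coefV:
  assumes "BC_inf V"
  shows "C1on UNIV (\<lambda>y. complex_of_real (V y))" "bc (\<lambda>y. complex_of_real (V y))"
proof -
  have s: "smooth_on UNIV V" using assms by (simp add: BC_inf_def)
  show "C1on UNIV (\<lambda>y. complex_of_real (V y))" by (rule C1_real0[OF s])
  obtain M where "\<And>y. \<bar>iter_pd [] V y\<bar> \<le> M" using BC_bound[OF assms] by blast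
  then show "bc (\<lambda>y. complex_of_real (V y))"
    unfolding bc_def using C1onD(1)[OF C1_real0[OF s]] by auto
qed

lemma C1_bx2: "C1on UNIV (\<lambda>x. complex_of_real (b * x $ 2))"
proof -
  have "C1on UNIV (\<lambda>x. complex_of_real b * complex_of_real (x $ 2))" by (rule C1on_mult[OF C1on_const C1_coord])
  then show ?thesis by (rule C1on_cong[OF open_UNIV]) simp
qed

lemma normsq2: "complex_of_real ((norm (v::real^2))\<^sup>2) = complex_of_real (v $ 1) * complex_of_real (v $ 1) + complex_of_real (v $ 2) * complex_of_real (v $ 2)"
proof -
  have "(norm v)\<^sup>2 = v \<bullet> v" by (simp add: power2_norm_eq_inner)
  also have "\<dots> = v $ 1 * v $ 1 + v $ 2 * v $ 2" by (simp add: inner_vec_def sum_2)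
  finally show ?thesis by simp
qed


lemma case_P1:
  assumes Av: "BC_inf Av"
  shows "(\<forall>u f. h_graph b u f \<longrightarrow> (\<exists>v. clos_graph (P1 b Av) u v))
    \<and> (\<exists>C. \<forall>lam>0. \<forall>u f v. h_graph b u f \<longrightarrow> clos_graph (P1 b Av) u v \<longrightarrow>
           nrm v \<le> C * sqrt (1 + lam) / lam * nrm (\<lambda>x. f x + complex_of_real lam * u x))
    \<and> (\<forall>\<epsilon>>0. \<exists>C\<^sub>\<epsilon>. \<forall>u f v. h_graph b u f \<longrightarrow> clos_graph (P1 b Av) u v \<longrightarrow>
           nrm v \<le> \<epsilon> * nrm f + C\<^sub>\<epsilon> * nrm u)"
proof (rule finish2[where ?a1.0 = "\<lambda>_. - \<i>" and ?a2.0 = "\<lambda>_. 0" and g = "\<lambda>x. complex_of_real (b * x $ 2) - complex_of_real (Av x $ 1)"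
      and ?d1.0 = "\<lambda>_. 1" and ?d2.0 = "\<lambda>_. 0" and ?c0.0 = "\<lambda>x. - complex_of_real (Av x $ 1)"])
  show "C1on UNIV (\<lambda>_. - \<i>)" "C1on UNIV (\<lambda>_. 0)" by (rule C1on_const)+
  show "C1on UNIV (\<lambda>x. complex_of_real (b * x $ 2) - complex_of_real (Av x $ 1))"
    by (rule C1on_diff[OF C1_bx2 coefA(1)[OF Av]])
  show "P1 b Av = Yop (\<lambda>_. - \<i>) (\<lambda>_. 0) (\<lambda>x. complex_of_real (b * x $ 2) - complex_of_real (Av x $ 1))"
    by (auto simp: fun_eq_iff P1_def P01_def Yop_def algebra_simps)
  show "P1 b Av \<psi> = (\<lambda>x. 1 * P01 b \<psi> x + 0 * P02 b \<psi> x + - complex_of_real (Av x $ 1) * \<psi> x)" for \<psi>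
    by (auto simp: fun_eq_iff P1_def)
  show "bc (\<lambda>x. - complex_of_real (Av x $ 1))" by (rule bc_uminus[OF coefA(2)[OF Av]])
  show "bc (\<lambda>_. 1)" "bc (\<lambda>_. 0)" by (rule bc_const)+
qed

lemma case_P2:
  assumes Av: "BC_inf Av"
  shows "(\<forall>u f. h_graph b u f \<longrightarrow> (\<exists>v. clos_graph (P2 b Av) u v))
    \<and> (\<exists>C. \<forall>lam>0. \<forall>u f v. h_graph b u f \<longrightarrow> clos_graph (P2 b Av) u v \<longrightarrow>
           nrm v \<le> C * sqrt (1 + lam) / lam * nrm (\<lambda>x. f x + complex_of_real lam * u x))
    \<and> (\<forall>\<epsilon>>0. \<exists>C\<^sub>\<epsilon>. \<forall>u f v. h_graph b u f \<longrightarrow> clos_graph (P2 b Av) u v \<longrightarrow>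
           nrm v \<le> \<epsilon> * nrm f + C\<^sub>\<epsilon> * nrm u)"
proof (rule finish2[where ?a1.0 = "\<lambda>_. 0" and ?a2.0 = "\<lambda>_. - \<i>" and g = "\<lambda>x. 0 - complex_of_real (Av x $ 2)"
      and ?d1.0 = "\<lambda>_. 0" and ?d2.0 = "\<lambda>_. 1" and ?c0.0 = "\<lambda>x. - complex_of_real (Av x $ 2)"])
  show "C1on UNIV (\<lambda>_. - \<i>)" "C1on UNIV (\<lambda>_. 0)" by (rule C1on_const)+
  show "C1on UNIV (\<lambda>x. 0 - complex_of_real (Av x $ 2))"
    by (rule C1on_diff[OF C1on_const coefA(1)[OF Av]])
  show "P2 b Av = Yop (\<lambda>_. 0) (\<lambda>_. - \<i>) (\<lambda>x. 0 - complex_of_real (Av x $ 2))"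
    by (auto simp: fun_eq_iff P2_def P02_def Yop_def algebra_simps)
  show "P2 b Av \<psi> = (\<lambda>x. 0 * P01 b \<psi> x + 1 * P02 b \<psi> x + - complex_of_real (Av x $ 2) * \<psi> x)" for \<psi>
    by (auto simp: fun_eq_iff P2_def)
  show "bc (\<lambda>x. - complex_of_real (Av x $ 2))" by (rule bc_uminus[OF coefA(2)[OF Av]])
  show "bc (\<lambda>_. 1)" "bc (\<lambda>_. 0)" by (rule bc_const)+
qed

lemma case_W:
  assumes Av: "BC_inf Av" and V: "BC_inf V"
  shows "(\<forall>u f. h_graph b u f \<longrightarrow> (\<exists>v. clos_graph (W b Av V) u v))
    \<and> (\<exists>C. \<forall>lam>0. \<forall>u f v. h_graph b u f \<longrightarrow> clos_graph (W b Av V) u v \<longrightarrow>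
           nrm v \<le> C * sqrt (1 + lam) / lam * nrm (\<lambda>x. f x + complex_of_real lam * u x))
    \<and> (\<forall>\<epsilon>>0. \<exists>C\<^sub>\<epsilon>. \<forall>u f v. h_graph b u f \<longrightarrow> clos_graph (W b Av V) u v \<longrightarrow>
           nrm v \<le> \<epsilon> * nrm f + C\<^sub>\<epsilon> * nrm u)"
proof -
  define A1 where "A1 x = complex_of_real (Av x $ 1)" for x
  define A2 where "A2 x = complex_of_real (Av x $ 2)" for x
  define D1 where "D1 x = complex_of_real (pdiff 1 (\<lambda>y. Av y $ 1) x)" for x
  define D2 where "D2 x = complex_of_real (pdiff 2 (\<lambda>y. Av y $ 2) x)" for x
  define Vc where "Vc x = complex_of_real (V x)" for x
  define B2 where "B2 (x::R2) = complex_of_real (b * x $ 2)" for x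
  have C: "C1on UNIV A1" "C1on UNIV A2" "C1on UNIV D1" "C1on UNIV D2" "C1on UNIV Vc" "C1on UNIV B2"
    unfolding A1_def[abs_def] A2_def[abs_def] D1_def[abs_def] D2_def[abs_def] Vc_def[abs_def] B2_def[abs_def]
    using coefA[OF Av] coefV[OF V] C1_bx2 by auto
  have bcs: "bc A1" "bc A2" "bc D1" "bc D2" "bc Vc"
    unfolding A1_def[abs_def] A2_def[abs_def] D1_def[abs_def] D2_def[abs_def] Vc_def[abs_def]
    using coefA[OF Av] coefV[OF V] by auto
  have nA: "complex_of_real ((norm (Av x))\<^sup>2) = A1 x * A1 x + A2 x * A2 x" for x
    unfolding A1_def A2_def by (rule normsq2)
  have dA: "complex_of_real (pdiff 1 (\<lambda>y. Av y $ 1) x + pdiff 2 (\<lambda>y. Av y $ 2) x) = D1 x + D2 x" for x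
    unfolding D1_def D2_def by simp
  show ?thesis
  proof (rule finish2[where ?a1.0 = "\<lambda>x. 2 * \<i> * A1 x" and ?a2.0 = "\<lambda>x. 2 * \<i> * A2 x"
      and g = "\<lambda>x. (-2) * A1 x * (B2 x - A1 x) + 2 * A2 x * A2 x - \<i> * (D1 x + D2 x) + (A1 x * A1 x + A2 x * A2 x) + Vc x"
      and ?d1.0 = "\<lambda>x. (-2) * A1 x" and ?d2.0 = "\<lambda>x. (-2) * A2 x"
      and ?c0.0 = "\<lambda>x. 2 * A1 x * A1 x + 2 * A2 x * A2 x - \<i> * (D1 x + D2 x) + (A1 x * A1 x + A2 x * A2 x) + Vc x"])
    show "C1on UNIV (\<lambda>x. 2 * \<i> * A1 x)" "C1on UNIV (\<lambda>x. 2 * \<i> * A2 x)"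
      using C by (auto intro!: C1on_mult C1on_const)
    show "C1on UNIV (\<lambda>x. (-2) * A1 x * (B2 x - A1 x) + 2 * A2 x * A2 x - \<i> * (D1 x + D2 x) + (A1 x * A1 x + A2 x * A2 x) + Vc x)"
      using C by (intro C1on_add C1on_diff C1on_mult C1on_const; simp)
    show "W b Av V = Yop (\<lambda>x. 2 * \<i> * A1 x) (\<lambda>x. 2 * \<i> * A2 x)
        (\<lambda>x. (-2) * A1 x * (B2 x - A1 x) + 2 * A2 x * A2 x - \<i> * (D1 x + D2 x) + (A1 x * A1 x + A2 x * A2 x) + Vc x)"
      unfolding fun_eq_iff W_def P1_def P2_def P01_def P02_def Yop_def nA dA
      by (simp add: A1_def A2_def B2_def Vc_def algebra_simps)
    show "W b Av V \<psi> = (\<lambda>x. (-2) * A1 x * P01 b \<psi> x + (-2) * A2 x * P02 b \<psi> x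
        + (2 * A1 x * A1 x + 2 * A2 x * A2 x - \<i> * (D1 x + D2 x) + (A1 x * A1 x + A2 x * A2 x) + Vc x) * \<psi> x)" for \<psi>
      unfolding fun_eq_iff W_def P1_def P2_def nA dA
      by (simp add: A1_def A2_def Vc_def algebra_simps)
    show "bc (\<lambda>x. 2 * A1 x * A1 x + 2 * A2 x * A2 x - \<i> * (D1 x + D2 x) + (A1 x * A1 x + A2 x * A2 x) + Vc x)"
      using bcs by (intro bc_add bc_diff bc_mult bc_const; simp)
    show "bc (\<lambda>x. (-2) * A1 x)" by (rule bc_mult[OF bc_const bcs(1)])
    show "bc (\<lambda>x. (-2) * A2 x)" by (rule bc_mult[OF bc_const bcs(2)])
  qed
qed

theorem lemma2p5:
  fixes V :: "R2 \<Rightarrow> real" and Av :: "R2 \<Rightarrow> real^2" and b :: real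
    and Y :: "cfun \<Rightarrow> cfun"
  assumes "BC_inf V" and "BC_inf Av"
    and "Y \<in> {P1 b Av, P2 b Av, W b Av V}"
  shows "(\<forall>u f. h_graph b u f \<longrightarrow> (\<exists>v. clos_graph Y u v))
    \<and> (\<exists>C. \<forall>lam>0. \<forall>u f v. h_graph b u f \<longrightarrow> clos_graph Y u v \<longrightarrow>
           nrm v \<le> C * sqrt (1 + lam) / lam * nrm (\<lambda>x. f x + complex_of_real lam * u x))
    \<and> (\<forall>\<epsilon>>0. \<exists>C\<^sub>\<epsilon>. \<forall>u f v. h_graph b u f \<longrightarrow> clos_graph Y u v \<longrightarrow>
           nrm v \<le> \<epsilon> * nrm f + C\<^sub>\<epsilon> * nrm u)"
proof -
  consider "Y = P1 b Av" | "Y = P2 b Av" | "Y = W b Av V" using assms(3) by blast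
  then show ?thesis
  proof cases
    case 1 show ?thesis unfolding 1 by (rule case_P1[OF assms(2)])
  next
    case 2 show ?thesis unfolding 2 by (rule case_P2[OF assms(2)])
  next
    case 3 show ?thesis unfolding 3 by (rule case_W[OF assms(2,1)])
  qed
qed


end
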